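(* Let $\tau(s,t)$ (write $\mathcal F=\log\tau$) and $\phi_0(s,t)$ be functions satisfying, as an identity of formal series in $z_1^{-1},z_2^{-1}$, $$z_1\exp\Bigl(\sum_{n\ge1}\frac1n\frac{\partial\phi_0}{\partial t_n}z_1^{-n}\Bigr)-z_2\exp\Bigl(\sum_{n\ge1}\frac1n\frac{\partial\phi_0}{\partial t_n}z_2^{-n}\Bigr)=(z_1-z_2)\exp\Bigl(\sum_{m,n\ge1}\frac{1}{mn}\frac{\partial^2\mathcal F}{\partial t_m\partial t_n}z_1^{-m}z_2^{-n}\Bigr).$$ Let $\mathsf k(z;s,t):=z\exp\bigl(\sum_{n\ge1}\frac1n\frac{\partial\phi_0}{\partial t_n}z^{-n}\bigr)$, let $\mathcal L(k;s,t)$ be its formal inverse series in $z$, and define the series $\mathcal P(k;s,t)$ by $$\mathcal P(\mathsf k(z;s,t);s,t)=\exp\Bigl(\frac{\partial\phi_0}{\partial s}\Bigr)z^N\exp\Bigl(-\sum_{n\ge1}\frac1n\frac{\partial^2\mathcal F}{\partial s\,\partial t_n}z^{-n}\Bigr).$$ Then $(\mathcal L,\mathcal P)$ satisfies the $N$-dcmKP hierarchy in the generalized sense (with $x$ identified with $t_1$).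
   Context: Fix a positive integer $N$. Variables: $s$ (continuous), $t=(t_1,t_2,\dots)$, with $x$ identified with $t_1$. Poisson bracket $\{f,g\}=\frac{\partial f}{\partial k}\frac{\partial g}{\partial x}-\frac{\partial f}{\partial x}\frac{\partial g}{\partial k}$ (with $\partial_x=\partial_{t_1}$). For $\mathcal L=k+\sum_{n\ge1}u_nk^{1-n}$ and $\mathcal P$, the $N$-dcmKP hierarchy is $\partial_{t_n}\mathcal L=\{\mathcal B_n,\mathcal L\}$ with $\mathcal B_n:=(\mathcal L^n)_{>0}$ (projection onto positive powers of $k$), $\partial_s\mathcal L=\{\log\mathcal P,\mathcal L\}$, $\partial_{t_n}\log\mathcal P=\partial_s\mathcal B_n-\{\log\mathcal P,\mathcal B_n\}$, $n\ge1$. "In the generalized sense" means $\mathcal P$ is allowed to be any formal series $\mathcal P=p_0k^N+\sum_{n\ge1}p_nk^{N-n}$ with $p_0\ne0$ (possibly infinitely many non-positive powers), with $\log\mathcal P:=\log p_0+N\log k+\log(1+\sum_{n\ge1}(p_n/p_0)k^{-n})$ expanded in $k^{-1}$. *)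

theory Defs
  imports "HOL-Analysis.Analysis" "HOL-Computational_Algebra.Formal_Laurent_Series"
begin

unbundle fps_syntax

(* A point of the (s,t)-space is  x :: nat => real  with
       x 0 = s,   x n = t_n  (n >= 1);   x-variable of the hierarchy = t_1 = index 1.
   Coefficient functions are  (nat => real) => real.
   A series in k with finitely many positive powers of k (possibly infinitely
   many negative ones), whose coefficients are functions of (s,t), is modelled
   as  S :: (nat => real) => real fls,  a real Laurent series in the variable
   X = k^{-1} at every point; so the coefficient of k^n is  S x $$ (-n).
   Likewise series in z^{-1} are series in w = z^{-1}.
   ------------------------------------------------------------------------ *)

type_synonym pt = "nat \<Rightarrow> real"

definition pd :: "nat \<Rightarrow> (pt \<Rightarrow> real) \<Rightarrow> pt \<Rightarrow> real" where
  "pd i f x = deriv (\<lambda>h. f (x(i := h))) (x i)"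

definition iter_pd :: "nat list \<Rightarrow> (pt \<Rightarrow> real) \<Rightarrow> pt \<Rightarrow> real" where
  "iter_pd js f = foldr pd js f"

definition smooth :: "(pt \<Rightarrow> real) \<Rightarrow> bool" where
  "smooth f \<longleftrightarrow> (\<forall>js.
     (\<forall>j x. (\<lambda>h. iter_pd js f (x(j := h))) differentiable (at (x j))) \<and>
     (\<forall>x0 I. finite I \<longrightarrow>
        continuous_on UNIV (\<lambda>y::pt. iter_pd js f (\<lambda>i. if i \<in> I then y i else x0 i))))"

definition pdS :: "nat \<Rightarrow> (pt \<Rightarrow> real fls) \<Rightarrow> pt \<Rightarrow> real fls" where
  "pdS i S x = Abs_fls (\<lambda>m. pd i (\<lambda>y. S y $$ m) x)"

text \<open>Derivative d/dk, written in the variable X = k^{-1}.\<close>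
definition kderiv :: "real fls \<Rightarrow> real fls" where
  "kderiv f = Abs_fls (\<lambda>m. of_int (1 - m) * f $$ (m - 1))"

definition pbr :: "(pt \<Rightarrow> real fls) \<Rightarrow> (pt \<Rightarrow> real fls) \<Rightarrow> pt \<Rightarrow> real fls" where
  "pbr F G x = kderiv (F x) * pdS 1 G x - pdS 1 F x * kderiv (G x)"

text \<open>Projection onto strictly positive powers of k (= negative powers of X).\<close>
definition pospart :: "real fls \<Rightarrow> real fls" where
  "pospart f = Abs_fls (\<lambda>m. if m < 0 then f $$ m else 0)"

definition Bn :: "(pt \<Rightarrow> real fls) \<Rightarrow> nat \<Rightarrow> pt \<Rightarrow> real fls" where
  "Bn L n x = pospart (L x ^ n)"

text \<open>log P = log p0 + N log k + log(1 + sum_{n>=1} (p_n/p0) k^{-n}), with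
  p0 = coefficient of k^N.  The constant part log p0 is taken as ln |p0|
  (only its derivatives enter the hierarchy).\<close>
definition logP_const :: "nat \<Rightarrow> (pt \<Rightarrow> real fls) \<Rightarrow> pt \<Rightarrow> real" where
  "logP_const N P x = ln \<bar>P x $$ (- int N)\<bar>"

definition logP_ser :: "nat \<Rightarrow> (pt \<Rightarrow> real fls) \<Rightarrow> pt \<Rightarrow> real fls" where
  "logP_ser N P x = fps_to_fls (fps_ln 1 oo
     (Abs_fps (\<lambda>n. P x $$ (int n - int N) / P x $$ (- int N)) - 1))"

text \<open>d/dk log P = N/k + d/dk(log(1+...)); note 1/k = X.\<close>
definition logP_dk :: "nat \<Rightarrow> (pt \<Rightarrow> real fls) \<Rightarrow> pt \<Rightarrow> real fls" where
  "logP_dk N P x = fls_const (of_nat N) * fls_X + kderiv (logP_ser N P x)"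

definition logP_d :: "nat \<Rightarrow> (pt \<Rightarrow> real fls) \<Rightarrow> nat \<Rightarrow> pt \<Rightarrow> real fls" where
  "logP_d N P i x = fls_const (pd i (logP_const N P) x) + pdS i (logP_ser N P) x"

definition pbr_log :: "nat \<Rightarrow> (pt \<Rightarrow> real fls) \<Rightarrow> (pt \<Rightarrow> real fls) \<Rightarrow> pt \<Rightarrow> real fls" where
  "pbr_log N P G x = logP_dk N P x * pdS 1 G x - logP_d N P 1 x * kderiv (G x)"

definition dcmKP :: "nat \<Rightarrow> (pt \<Rightarrow> real fls) \<Rightarrow> (pt \<Rightarrow> real fls) \<Rightarrow> bool" where
  "dcmKP N L P \<longleftrightarrow>
     \<comment> \<open>L = k + sum_{n>=1} u_n k^{1-n}\<close>
     (\<forall>x. L x $$ (-1) = 1 \<and> (\<forall>m < -1. L x $$ m = 0)) \<and>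
     \<comment> \<open>P = p0 k^N + sum_{n>=1} p_n k^{N-n}, p0 nonzero\<close>
     (\<forall>x. P x $$ (- int N) \<noteq> 0 \<and> (\<forall>m < - int N. P x $$ m = 0)) \<and>
     \<comment> \<open>the coefficients are differentiable in every variable\<close>
     (\<forall>m i x. (\<lambda>h. L (x(i := h)) $$ m) differentiable (at (x i)) \<and>
              (\<lambda>h. P (x(i := h)) $$ m) differentiable (at (x i))) \<and>
     \<comment> \<open>d_{t_n} L = {B_n, L}\<close>
     (\<forall>n\<ge>1. \<forall>x. pdS n L x = pbr (Bn L n) L x) \<and>
     \<comment> \<open>d_s L = {log P, L}\<close>
     (\<forall>x. pdS 0 L x = pbr_log N P L x) \<and>
     \<comment> \<open>d_{t_n} log P = d_s B_n - {log P, B_n}\<close>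
     (\<forall>n\<ge>1. \<forall>x. logP_d N P n x = pdS 0 (Bn L n) x - pbr_log N P (Bn L n) x)"

text \<open>A(w) = sum_{n>=1} (1/n) d_{t_n} phi0 w^n, and E = exp A, so that
  k(z) = z exp(sum (1/n) d_{t_n}phi0 z^{-n}) = w^{-1} E(w), w = z^{-1}.\<close>
definition Aser :: "(pt \<Rightarrow> real) \<Rightarrow> pt \<Rightarrow> real fps" where
  "Aser phi0 x = Abs_fps (\<lambda>n. if n = 0 then 0 else pd n phi0 x / of_nat n)"

definition Eser :: "(pt \<Rightarrow> real) \<Rightarrow> pt \<Rightarrow> real fps" where
  "Eser phi0 x = fps_exp 1 oo Aser phi0 x"

definition kz :: "(pt \<Rightarrow> real) \<Rightarrow> pt \<Rightarrow> real fls" where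
  "kz phi0 x = fls_X_inv * fps_to_fls (Eser phi0 x)"

text \<open>Substituting k = k(z) into a series f in X = k^{-1} means substituting
  X = 1/k(z) = w / E(w), a power series in w with zero constant term.\<close>
definition subst_kz :: "real fls \<Rightarrow> (pt \<Rightarrow> real) \<Rightarrow> pt \<Rightarrow> real fls" where
  "subst_kz f phi0 x = fls_compose_fps f (fls_regpart (inverse (kz phi0 x)))"

definition Hser :: "(pt \<Rightarrow> real) \<Rightarrow> pt \<Rightarrow> real fps" where
  "Hser F x = Abs_fps (\<lambda>n. if n = 0 then 0 else - pd 0 (pd n F) x / of_nat n)"

(* bivariate power series in w1 = z1^{-1}, w2 = z2^{-1}: coefficient arrays *)
definition bmul :: "(nat \<Rightarrow> nat \<Rightarrow> real) \<Rightarrow> (nat \<Rightarrow> nat \<Rightarrow> real) \<Rightarrow> nat \<Rightarrow> nat \<Rightarrow> real" where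
  "bmul f g i j = (\<Sum>a\<le>i. \<Sum>b\<le>j. f a b * g (i - a) (j - b))"

definition bone :: "nat \<Rightarrow> nat \<Rightarrow> real" where
  "bone i j = (if i = 0 \<and> j = 0 then 1 else 0)"

definition bpow :: "(nat \<Rightarrow> nat \<Rightarrow> real) \<Rightarrow> nat \<Rightarrow> nat \<Rightarrow> nat \<Rightarrow> real" where
  "bpow G p = (bmul G ^^ p) bone"

text \<open>exp of a bivariate series G with G 0 0 = 0 (then G^p has total degree >= p).\<close>
definition bexp :: "(nat \<Rightarrow> nat \<Rightarrow> real) \<Rightarrow> nat \<Rightarrow> nat \<Rightarrow> real" where
  "bexp G i j = (\<Sum>p\<le>i + j. bpow G p i j / fact p)"

definition Gbi :: "(pt \<Rightarrow> real) \<Rightarrow> pt \<Rightarrow> nat \<Rightarrow> nat \<Rightarrow> real" where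
  "Gbi F x m n = (if m = 0 \<or> n = 0 then 0
                  else pd m (pd n F) x / (of_nat m * of_nat n))"

definition bcoeff :: "(nat \<Rightarrow> nat \<Rightarrow> real) \<Rightarrow> int \<Rightarrow> int \<Rightarrow> real" where
  "bcoeff X i j = (if 0 \<le> i \<and> 0 \<le> j then X (nat i) (nat j) else 0)"

text \<open>Coefficient of z1^a z2^b in  z1 exp(sum (1/n) phi0_{t_n} z1^{-n}) - (same in z2).\<close>
definition bilin_lhs :: "(pt \<Rightarrow> real) \<Rightarrow> pt \<Rightarrow> int \<Rightarrow> int \<Rightarrow> real" where
  "bilin_lhs phi0 x a b =
     (if b = 0 \<and> a \<le> 1 then Eser phi0 x $ nat (1 - a) else 0)
   - (if a = 0 \<and> b \<le> 1 then Eser phi0 x $ nat (1 - b) else 0)"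

text \<open>Coefficient of z1^a z2^b in (z1 - z2) exp(sum (1/(mn)) F_{t_m t_n} z1^{-m} z2^{-n}).\<close>
definition bilin_rhs :: "(pt \<Rightarrow> real) \<Rightarrow> pt \<Rightarrow> int \<Rightarrow> int \<Rightarrow> real" where
  "bilin_rhs F x a b =
     bcoeff (bexp (Gbi F x)) (1 - a) (- b) - bcoeff (bexp (Gbi F x)) (- a) (1 - b)"

end

theory Submission
  imports Defs
begin

no_notation vec_nth (infixl "$" 90)





definition fder :: "(real \<Rightarrow> real fps) \<Rightarrow> real fps \<Rightarrow> real \<Rightarrow> bool" where
  "fder S S' t \<longleftrightarrow> (\<forall>m. ((\<lambda>h. S h $ m) has_real_derivative (S' $ m)) (at t))"

lemma fderD: "fder S S' t \<Longrightarrow> ((\<lambda>h. S h $ m) has_real_derivative (S' $ m)) (at t)"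
  by (simp add: fder_def)

lemma fder_const: "fder (\<lambda>h. c) 0 t"
  by (simp add: fder_def)

lemma fder_add: "fder S S' t \<Longrightarrow> fder T T' t \<Longrightarrow> fder (\<lambda>h. S h + T h) (S' + T') t"
  by (auto simp: fder_def intro!: derivative_eq_intros)

lemma fder_diff: "fder S S' t \<Longrightarrow> fder T T' t \<Longrightarrow> fder (\<lambda>h. S h - T h) (S' - T') t"
  by (auto simp: fder_def intro!: derivative_eq_intros)

lemma fder_minus: "fder S S' t \<Longrightarrow> fder (\<lambda>h. - S h) (- S') t"
  by (auto simp: fder_def intro!: derivative_eq_intros)

lemma fder_unique: "fder S A t \<Longrightarrow> fder S B t \<Longrightarrow> A = B"
  unfolding fder_def fps_eq_iff using DERIV_unique by blast

lemma fder_mult: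
  assumes "fder S S' t" "fder T T' t"
  shows "fder (\<lambda>h. S h * T h) (S' * T t + S t * T') t"
  unfolding fder_def
proof
  fix m
  have "((\<lambda>h. \<Sum>i=0..m. S h $ i * T h $ (m - i)) has_real_derivative
        (\<Sum>i=0..m. S' $ i * T t $ (m - i) + S t $ i * T' $ (m - i))) (at t)"
    using assms by (auto simp: fder_def mult.commute intro!: derivative_eq_intros)
  then show "((\<lambda>h. (S h * T h) $ m) has_real_derivative (S' * T t + S t * T') $ m) (at t)"
    by (simp add: fps_mult_nth sum.distrib)
qed

lemma fder_const_mult:
  assumes "fder T T' t"
  shows "fder (\<lambda>h. c * T h) (c * T') t"
  using fder_mult[OF fder_const assms, of c] by simp

lemma fder_power:
  assumes "fder S S' t"
  shows "fder (\<lambda>h. S h ^ n) (of_nat n * S t ^ (n - 1) * S') t"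
proof (induction n)
  case 0
  then show ?case using fder_const[of 1 t] by simp
next
  case (Suc n)
  have "fder (\<lambda>h. S h * S h ^ n) (S' * S t ^ n + S t * (of_nat n * S t ^ (n - 1) * S')) t"
    by (rule fder_mult[OF assms Suc])
  moreover have "S' * S t ^ n + S t * (of_nat n * S t ^ (n - 1) * S') = of_nat (Suc n) * S t ^ n * S'"
  proof (cases n)
    case 0 then show ?thesis by simp
  next
    case (Suc k)
    then show ?thesis by (simp add: algebra_simps)
  qed
  ultimately show ?case by simp
qed

lemma fder_fps_const:
  assumes "((\<lambda>h. c h) has_real_derivative c') (at t)"
  shows "fder (\<lambda>h. fps_const (c h)) (fps_const c') t"
  unfolding fder_def
proof
  fix m show "((\<lambda>h. fps_const (c h) $ m) has_real_derivative fps_const c' $ m) (at t)"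
    using assms by (cases m) auto
qed

lemma fder_sum:
  assumes "finite A" "\<And>a. a \<in> A \<Longrightarrow> fder (S a) (S' a) t"
  shows "fder (\<lambda>h. \<Sum>a\<in>A. S a h) (\<Sum>a\<in>A. S' a) t"
  using assms unfolding fder_def by (auto simp: fps_sum_nth intro!: DERIV_sum)

lemma deriv0_of_const0:
  assumes "fder g g' t" "\<forall>h. g h $ 0 = 0"
  shows "g' $ 0 = 0"
proof -
  have "((\<lambda>h. g h $ 0) has_real_derivative g' $ 0) (at t)" using assms fderD by blast
  moreover have "((\<lambda>h. g h $ 0) has_real_derivative 0) (at t)" using assms(2) by simp
  ultimately show ?thesis using DERIV_unique by blast
qed

lemma compose_times_nth:
  fixes b g c :: "'a::comm_ring_1 fps"
  assumes g0: "g $ 0 = 0"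
  shows "((b oo g) * c) $ m = (\<Sum>j=0..m. b $ j * (g ^ j * c) $ m)"
proof -
  have "((b oo g) * c) $ m = (\<Sum>i=0..m. (\<Sum>j=0..i. b $ j * (g ^ j) $ i) * c $ (m - i))"
    by (simp add: fps_mult_nth fps_compose_nth)
  also have "\<dots> = (\<Sum>i=0..m. \<Sum>j=0..m. b $ j * (g ^ j) $ i * c $ (m - i))"
  proof (rule sum.cong[OF refl])
    fix i assume i: "i \<in> {0..m}"
    have "(\<Sum>j=0..i. b $ j * (g ^ j) $ i) * c $ (m - i) = (\<Sum>j=0..i. b $ j * (g ^ j) $ i * c $ (m - i))"
      by (simp add: sum_distrib_right)
    also have "\<dots> = (\<Sum>j=0..m. b $ j * (g ^ j) $ i * c $ (m - i))"
      using i by (intro sum.mono_neutral_left) (auto simp: startsby_zero_power_prefix[OF g0])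
    finally show "(\<Sum>j=0..i. b $ j * (g ^ j) $ i) * c $ (m - i) = (\<Sum>j=0..m. b $ j * (g ^ j) $ i * c $ (m - i))" .
  qed
  also have "\<dots> = (\<Sum>j=0..m. \<Sum>i=0..m. b $ j * (g ^ j) $ i * c $ (m - i))"
    by (rule sum.swap)
  also have "\<dots> = (\<Sum>j=0..m. b $ j * (g ^ j * c) $ m)"
    by (simp add: fps_mult_nth sum_distrib_left mult.assoc)
  finally show ?thesis .
qed

lemma fder_compose:
  assumes a: "fder a a' t" and g: "fder g g' t" and g0: "\<forall>h. g h $ 0 = 0"
  shows "fder (\<lambda>h. a h oo g h) ((a' oo g t) + (fps_deriv (a t) oo g t) * g') t"
  unfolding fder_def
proof
  fix m
  have gp: "fder (\<lambda>h. g h ^ j) (of_nat j * g t ^ (j - 1) * g') t" for j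
    by (rule fder_power[OF g])
  have D: "((\<lambda>h. \<Sum>j=0..m. a h $ j * (g h ^ j) $ m) has_real_derivative
        (\<Sum>j=0..m. a' $ j * (g t ^ j) $ m + a t $ j * (of_nat j * g t ^ (j - 1) * g') $ m)) (at t)"
    using a gp by (auto simp: fder_def mult.commute intro!: derivative_eq_intros)
  have g'0: "g' $ 0 = 0" by (rule deriv0_of_const0[OF g g0])
  define f where "f j = a t $ j * (of_nat j * g t ^ (j - 1) * g') $ m" for j
  have "(\<Sum>j=0..Suc m. f j) = f 0 + (\<Sum>j=0..m. f (Suc j))"
    unfolding sum.atLeast0_atMost_Suc_shift by (simp only: comp_def)
  moreover have "f 0 = 0" by (simp add: f_def)
  moreover have "(\<Sum>j=0..Suc m. f j) = (\<Sum>j=0..m. f j) + f (Suc m)" by simp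
  moreover have "f (Suc m) = 0"
  proof -
    have "(g t ^ m * g') $ m = (\<Sum>i=0..m. (g t ^ m) $ i * g' $ (m - i))" by (simp add: fps_mult_nth)
    also have "\<dots> = 0"
    proof (intro sum.neutral ballI)
      fix i assume i: "i \<in> {0..m}"
      show "(g t ^ m) $ i * g' $ (m - i) = 0"
      proof (cases "i = m")
        case True then show ?thesis using g'0 by simp
      next
        case False then have "i < m" using i by auto
        then show ?thesis using g0 startsby_zero_power_prefix[of "g t" m] by auto
      qed
    qed
    finally show ?thesis by (simp add: f_def mult.assoc flip: fps_of_nat)
  qed
  ultimately have "(\<Sum>j=0..m. f j) = (\<Sum>j=0..m. f (Suc j))" by simp
  also have "\<dots> = (\<Sum>j=0..m. fps_deriv (a t) $ j * (g t ^ j * g') $ m)"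
    by (intro sum.cong refl) (simp add: f_def mult.assoc fps_mult_left_const_nth flip: fps_of_nat)
  also have "\<dots> = ((fps_deriv (a t) oo g t) * g') $ m"
    using g0 by (simp add: compose_times_nth)
  finally have "(\<Sum>j=0..m. f j) = ((fps_deriv (a t) oo g t) * g') $ m" .
  then show "((\<lambda>h. (a h oo g h) $ m) has_real_derivative ((a' oo g t) + (fps_deriv (a t) oo g t) * g') $ m) (at t)"
    using D by (simp add: fps_compose_nth sum.distrib f_def)
qed

definition fdiff :: "(real \<Rightarrow> real fps) \<Rightarrow> real \<Rightarrow> bool" where
  "fdiff T t \<longleftrightarrow> (\<forall>m. (\<lambda>h. T h $ m) differentiable (at t))"

lemma fdiff_fder: "fdiff T t \<Longrightarrow> fder T (Abs_fps (\<lambda>m. deriv (\<lambda>h. T h $ m) t)) t"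
  unfolding fdiff_def fder_def using DERIV_deriv_iff_real_differentiable by auto

lemma fder_fdiff: "fder T T' t \<Longrightarrow> fdiff T t"
  unfolding fdiff_def fder_def using real_differentiable_def by blast

lemma tri_diff:
  assumes R: "\<forall>h m. R h $ m = T h $ m + (\<Sum>j<m. a h m j * T h $ j)"
    and a: "\<forall>m j. (\<lambda>h. a h m j) differentiable (at t)"
    and Rd: "\<forall>m. (\<lambda>h. R h $ m) differentiable (at t)"
  shows "fdiff T t"
  unfolding fdiff_def
proof
  fix m show "(\<lambda>h. T h $ m) differentiable (at t)"
  proof (induction m rule: less_induct)
    case (less m)
    have eq: "(\<lambda>h. T h $ m) = (\<lambda>h. R h $ m - (\<Sum>j<m. a h m j * T h $ j))"
      using R by (auto simp: algebra_simps)
    show ?case unfolding eq using less a Rd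
      by (intro differentiable_diff differentiable_sum differentiable_mult) auto
  qed
qed

lemma fder_inverse:
  assumes S: "fder S S' t" and S0: "\<forall>h. S h $ 0 = 1"
  shows "fder (\<lambda>h. inverse (S h)) (- S' * inverse (S t) ^ 2) t"
proof -
  define T where "T h = inverse (S h)" for h
  have ST: "T h * S h = 1" for h using S0 by (simp add: T_def inverse_mult_eq_1)
  have "fdiff T t"
  proof (rule tri_diff[where R = "\<lambda>h. 1" and a = "\<lambda>h m j. S h $ (m - j)"])
    show "\<forall>h m. (1::real fps) $ m = T h $ m + (\<Sum>j<m. S h $ (m - j) * T h $ j)"
    proof (intro allI)
      fix h m
      have "(1::real fps) $ m = (T h * S h) $ m" using ST by simp
      also have "\<dots> = (\<Sum>j=0..m. T h $ j * S h $ (m - j))" by (simp add: fps_mult_nth)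
      also have "\<dots> = (\<Sum>j<m. T h $ j * S h $ (m - j)) + T h $ m * S h $ 0"
        by (simp add: atLeast0AtMost lessThan_Suc_atMost[symmetric])
      finally show "(1::real fps) $ m = T h $ m + (\<Sum>j<m. S h $ (m - j) * T h $ j)"
        using S0 by (simp add: mult.commute)
    qed
    show "\<forall>m j. (\<lambda>h. S h $ (m - j)) differentiable (at t)"
      using S unfolding fder_def real_differentiable_def by blast
  qed auto
  then obtain T' where T': "fder T T' t" using fdiff_fder by blast
  have "fder (\<lambda>h. T h * S h) (T' * S t + T t * S') t" by (rule fder_mult[OF T' S])
  moreover have "fder (\<lambda>h. T h * S h) 0 t" using ST fder_const[of 1 t] by simp
  ultimately have "T' * S t + T t * S' = 0" using fder_unique by blast
  then have "T' * S t * T t + T t * S' * T t = 0" by (metis distrib_right mult_zero_left)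
  then have "T' = - S' * T t ^ 2" using ST[of t]
    by (simp add: power2_eq_square algebra_simps eq_neg_iff_add_eq_0)
  then show ?thesis using T' by (simp add: T_def[abs_def])
qed

lemma fder_compose_inv:
  assumes g: "fder g g' t" and g0: "\<forall>h. g h $ 0 = 0" and g1: "\<forall>h. g h $ 1 = 1"
    and U: "fdiff (\<lambda>h. a h oo g h) t"
  shows "fdiff a t"
proof (rule tri_diff[where R = "\<lambda>h. a h oo g h" and a = "\<lambda>h m j. (g h ^ j) $ m"])
  show "\<forall>h m. (a h oo g h) $ m = a h $ m + (\<Sum>j<m. (g h ^ j) $ m * a h $ j)"
  proof (intro allI)
    fix h m
    have "(a h oo g h) $ m = (\<Sum>j<m. a h $ j * (g h ^ j) $ m) + a h $ m * (g h ^ m) $ m"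
      by (simp add: fps_compose_nth atLeast0AtMost lessThan_Suc_atMost[symmetric])
    moreover have "(g h ^ m) $ m = 1" using g0 g1 by (simp add: startsby_zero_power_nth_same)
    ultimately show "(a h oo g h) $ m = a h $ m + (\<Sum>j<m. (g h ^ j) $ m * a h $ j)"
      by (simp add: mult.commute)
  qed
  show "\<forall>m j. (\<lambda>h. (g h ^ j) $ m) differentiable (at t)"
    using fder_power[OF g] unfolding fder_def real_differentiable_def by blast
  show "\<forall>m. (\<lambda>h. (a h oo g h) $ m) differentiable (at t)" using U by (simp add: fdiff_def)
qed

lemma fder_exp_compose:
  assumes A: "fder A A' t" and A0: "\<forall>h. A h $ 0 = 0"
  shows "fder (\<lambda>h. fps_exp 1 oo A h) ((fps_exp 1 oo A t) * A') t"
  using fder_compose[OF fder_const A A0, of "fps_exp 1"] by simp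





lemma exp_compose_deriv:
  fixes u :: "'a::field_char_0 fps"
  assumes "u $ 0 = 0"
  shows "fps_deriv (fps_exp 1 oo u) = (fps_exp 1 oo u) * fps_deriv u"
  using assms by (simp add: fps_compose_deriv)

lemma exp_ODE_unique:
  fixes f u :: "'a::field_char_0 fps"
  assumes u0: "u $ 0 = 0" and f0: "f $ 0 = 1" and D: "fps_deriv f = f * fps_deriv u"
  shows "f = fps_exp 1 oo u"
proof -
  define e where "e = fps_exp 1 oo u"
  have e0: "e $ 0 = 1" by (simp add: e_def)
  have De: "fps_deriv e = e * fps_deriv u" unfolding e_def by (rule exp_compose_deriv[OF u0])
  have "fps_deriv (f * inverse e) = fps_deriv f * inverse e + f * fps_deriv (inverse e)"
    by simp
  also have "\<dots> = f * fps_deriv u * inverse e - f * (e * fps_deriv u) * (inverse e)^2"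
    using e0 by (simp add: D De fps_inverse_deriv)
  also have "\<dots> = 0"
    using e0 by (simp add: power2_eq_square algebra_simps inverse_mult_eq_1')
  finally have "fps_deriv (f * inverse e) = 0" .
  then have "f * inverse e = fps_const ((f * inverse e) $ 0)" by (simp only: fps_deriv_eq_0_iff)
  also have "(f * inverse e) $ 0 = 1" using f0 e0 by simp
  finally have "f * inverse e = 1" by simp
  then have "f * inverse e * e = e" by simp
  then show ?thesis using e0 by (simp add: e_def mult.assoc inverse_mult_eq_1)
qed

lemma exp_compose_add:
  fixes u v :: "'a::field_char_0 fps"
  assumes u0: "u $ 0 = 0" and v0: "v $ 0 = 0"
  shows "fps_exp 1 oo (u + v) = (fps_exp 1 oo u) * (fps_exp 1 oo v)"
proof (rule sym, rule exp_ODE_unique)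
  show "(u + v) $ 0 = 0" using u0 v0 by simp
  show "((fps_exp 1 oo u) * (fps_exp 1 oo v)) $ 0 = 1" by simp
  show "fps_deriv ((fps_exp 1 oo u) * (fps_exp 1 oo v)) =
        (fps_exp 1 oo u) * (fps_exp 1 oo v) * fps_deriv (u + v)"
    using u0 v0 by (simp add: exp_compose_deriv algebra_simps)
qed

lemma exp_compose_0: "fps_exp (1::'a::field_char_0) oo 0 = 1"
  by simp

lemma exp_compose_minus:
  fixes u :: "'a::field_char_0 fps"
  assumes u0: "u $ 0 = 0"
  shows "fps_exp 1 oo (- u) = inverse (fps_exp 1 oo u)"
proof -
  have "(fps_exp 1 oo (- u)) * (fps_exp 1 oo u) = 1"
    using exp_compose_add[of "-u" u] u0 by simp
  then show ?thesis by (metis fps_inverse_unique mult.commute)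
qed

lemma ln_exp_compose:
  fixes u :: "'a::field_char_0 fps"
  assumes u0: "u $ 0 = 0"
  shows "fps_ln 1 oo ((fps_exp 1 oo u) - 1) = u"
proof -
  define b where "b = (fps_exp 1 oo u) - 1"
  have b0: "b $ 0 = 0" by (simp add: b_def)
  have "fps_deriv (fps_ln 1 oo b) = (fps_deriv (fps_ln 1) oo b) * fps_deriv b"
    using b0 by (simp add: fps_compose_deriv)
  also have "fps_deriv (fps_ln 1) oo b = inverse (1 + fps_X) oo b"
    by (simp add: fps_ln_deriv)
  also have "\<dots> = inverse ((1 + fps_X) oo b)"
    using b0 by (simp add: fps_inverse_compose)
  also have "(1 + fps_X) oo b = fps_exp 1 oo u"
    using b0 by (simp add: fps_compose_add_distrib b_def)
  also have "fps_deriv b = (fps_exp 1 oo u) * fps_deriv u"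
    using u0 by (simp add: b_def exp_compose_deriv)
  finally have "fps_deriv (fps_ln 1 oo b) = fps_deriv u"
    by (simp add: mult.assoc[symmetric] inverse_mult_eq_1)
  then show ?thesis using u0 by (simp add: fps_deriv_eq_iff b_def)
qed

lemma exp_ln_compose:
  fixes b :: "'a::field_char_0 fps"
  assumes b0: "b $ 0 = 0"
  shows "fps_exp 1 oo (fps_ln 1 oo b) = 1 + b"
proof (rule sym, rule exp_ODE_unique)
  show "(fps_ln 1 oo b) $ 0 = 0" by simp
  show "(1 + b) $ 0 = 1" using b0 by simp
  have "fps_deriv (fps_ln 1 oo b) = inverse (1 + b) * fps_deriv b"
    using b0 by (simp add: fps_compose_deriv fps_ln_deriv fps_inverse_compose fps_compose_add_distrib mult.commute)
  then show "fps_deriv (1 + b) = (1 + b) * fps_deriv (fps_ln 1 oo b)"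
  proof -
    have "(1 + b) * inverse (1 + b) = 1" using b0 by (simp add: inverse_mult_eq_1')
    then show ?thesis using b0 \<open>fps_deriv (fps_ln 1 oo b) = _\<close>
      by (simp add: mult.assoc[symmetric])
  qed
qed





definition iota :: "real fps \<Rightarrow> real fls fps" where
  "iota a = Abs_fps (\<lambda>n. fls_const (a $ n))"

lemma iota_nth [simp]: "iota a $ n = fls_const (a $ n)"
  by (simp add: iota_def)

lemma fls_const_sum: "fls_const (\<Sum>i\<in>A. f i) = (\<Sum>i\<in>A. fls_const (f i))"
  by (rule fls_eqI) (simp add: fls_nth_sum)

lemma iota_add [simp]: "iota (a + b) = iota a + iota b"
  by (simp add: fps_eq_iff fls_plus_const)

lemma iota_minus [simp]: "iota (- a) = - iota a"
  by (simp add: fps_eq_iff)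

lemma iota_diff [simp]: "iota (a - b) = iota a - iota b"
  by (simp add: fps_eq_iff fls_eq_iff)

lemma iota_mult [simp]: "iota (a * b) = iota a * iota b"
  by (simp add: fps_eq_iff fps_mult_nth fls_const_sum)

lemma iota_one [simp]: "iota 1 = 1"
  by (simp add: fps_eq_iff)

lemma iota_X [simp]: "iota fps_X = fps_X"
  by (simp add: fps_eq_iff)

lemma iota_power [simp]: "iota (a ^ n) = iota a ^ n"
  by (induction n) simp_all

lemma iota_const [simp]: "iota (fps_const c) = fps_const (fls_const c)"
  by (simp add: fps_eq_iff)

lemma iota_deriv [simp]: "iota (fps_deriv a) = fps_deriv (iota a)"
  by (simp add: fps_eq_iff fls_of_nat)

lemma iota_exp:
  assumes A0: "A $ 0 = 0"
  shows "iota (fps_exp 1 oo A) = fps_exp 1 oo iota A"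
proof (rule exp_ODE_unique)
  show "iota A $ 0 = 0" using A0 by simp
  show "iota (fps_exp 1 oo A) $ 0 = 1" by simp
  show "fps_deriv (iota (fps_exp 1 oo A)) = iota (fps_exp 1 oo A) * fps_deriv (iota A)"
    using A0 by (simp flip: iota_deriv iota_mult add: exp_compose_deriv)
qed

definition iota2 :: "(nat \<Rightarrow> nat \<Rightarrow> real) \<Rightarrow> real fls fps" where
  "iota2 f = Abs_fps (\<lambda>j. fps_to_fls (Abs_fps (\<lambda>i. f i j)))"

lemma iota2_nth: "iota2 f $ j $$ k = (if k < 0 then 0 else f (nat k) j)"
  by (simp add: iota2_def)

lemma iota2_nth_nat [simp]: "iota2 f $ j $$ int i = f i j"
  by (simp add: iota2_def)

lemma iota2_one [simp]: "iota2 bone = 1"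
  by (simp add: fps_eq_iff fls_eq_iff iota2_def bone_def)

lemma iota2_mult: "iota2 (bmul f g) = iota2 f * iota2 g"
proof (rule fps_ext, rule fls_eqI)
  fix j :: nat and k :: int
  show "iota2 (bmul f g) $ j $$ k = (iota2 f * iota2 g) $ j $$ k"
  proof (cases "k < 0")
    case True
    then show ?thesis by (simp add: iota2_nth fps_mult_nth fls_nth_sum iota2_def flip: fls_times_fps_to_fls)
  next
    case False
    then obtain i where k: "k = int i" by (metis nonneg_int_cases not_less)
    have "(iota2 f * iota2 g) $ j = (\<Sum>b=0..j. fps_to_fls (Abs_fps (\<lambda>i. f i b) * Abs_fps (\<lambda>i. g i (j - b))))"
      by (simp add: fps_mult_nth iota2_def fls_times_fps_to_fls)
    then have "(iota2 f * iota2 g) $ j $$ k = (\<Sum>b=0..j. \<Sum>a=0..i. f a b * g (i - a) (j - b))"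
      by (simp add: k fls_nth_sum fps_mult_nth)
    also have "\<dots> = bmul f g i j"
      unfolding bmul_def by (subst sum.swap) (simp add: atLeast0AtMost)
    finally show ?thesis by (simp add: k)
  qed
qed

lemma iota2_bpow: "iota2 (bpow G p) = iota2 G ^ p"
proof (induction p)
  case 0 then show ?case by (simp add: bpow_def)
next
  case (Suc p)
  have "bpow G (Suc p) = bmul G (bpow G p)" by (simp add: bpow_def)
  then show ?case by (simp add: iota2_mult Suc)
qed

lemma fls_fact_div: "(x::real fls) / fact p = fls_const (1 / fact p) * x"
proof -
  have "(fact p :: real fls) = fls_const (fact p)"
    by (metis fls_of_nat of_nat_fact)
  then show ?thesis by (simp add: divide_inverse fls_inverse_const mult.commute)
qed

lemma iota2_bexp:
  assumes G0: "\<forall>i. G i 0 = 0"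
  shows "iota2 (bexp G) = fps_exp 1 oo iota2 G"
proof (rule fps_ext, rule fls_eqI)
  fix j :: nat and k :: int
  have S0: "iota2 G $ 0 = 0" using G0 by (simp add: iota2_def fps_eq_iff)
  have eq: "(fps_exp 1 oo iota2 G) $ j = (\<Sum>p=0..j. fls_const (1 / fact p) * iota2 (bpow G p) $ j)"
    by (simp add: fps_compose_nth iota2_bpow fls_fact_div)
  show "iota2 (bexp G) $ j $$ k = (fps_exp 1 oo iota2 G) $ j $$ k"
  proof (cases "k < 0")
    case True
    then show ?thesis unfolding eq by (simp add: iota2_nth fls_nth_sum)
  next
    case False
    then obtain i where k: "k = int i" by (metis nonneg_int_cases not_less)
    have "(fps_exp 1 oo iota2 G) $ j $$ k = (\<Sum>p=0..j. bpow G p i j / fact p)"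
      using \<open>(fps_exp 1 oo iota2 G) $ j = _\<close> by (simp add: k fls_nth_sum)
    also have "\<dots> = (\<Sum>p\<le>i + j. bpow G p i j / fact p)"
    proof (rule sum.mono_neutral_left)
      show "\<forall>p\<in>{..i + j} - {0..j}. bpow G p i j / fact p = 0"
      proof
        fix p assume "p \<in> {..i + j} - {0..j}"
        then have "j < p" by auto
        then have "(iota2 G ^ p) $ j = 0" using S0 startsby_zero_power_prefix by blast
        then have "iota2 (bpow G p) $ j $$ int i = 0" by (simp add: iota2_bpow)
        then show "bpow G p i j / fact p = 0" by simp
      qed
    qed auto
    finally show ?thesis by (simp add: k bexp_def)
  qed
qed

lemma bil_R:
  fixes E :: "real fps" and M :: "nat \<Rightarrow> nat \<Rightarrow> real"
  assumes bil: "\<forall>i j. (if j = 1 then E $ i else 0) - (if i = 1 then E $ j else 0) =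
      (if 1 \<le> j then M i (j - 1) else 0) - (if 1 \<le> i then M (i - 1) j else 0)"
  shows "fps_X * fps_const (fps_to_fls E) - fps_const fls_X * iota E = (fps_X - fps_const fls_X) * iota2 M"
proof (rule fps_ext, rule fls_eqI)
  fix j :: nat and k :: int
  show "(fps_X * fps_const (fps_to_fls E) - fps_const fls_X * iota E) $ j $$ k =
        ((fps_X - fps_const fls_X) * iota2 M) $ j $$ k"
  proof (cases "k < 0")
    case True
    then show ?thesis
      by (simp add: fps_X_mult_nth algebra_simps fps_mult_left_const_nth fls_X_times_conv_shift iota2_nth)
  next
    case False
    then obtain i where k: "k = int i" by (metis nonneg_int_cases not_less)
    have L: "(fps_X * fps_const (fps_to_fls E) - fps_const fls_X * iota E) $ j $$ k =
          (if j = 1 then E $ i else 0) - (if i = 1 then E $ j else 0)"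
      by (auto simp: k fps_X_mult_nth fps_mult_left_const_nth fls_X_times_conv_shift)
    have R: "((fps_X - fps_const fls_X) * iota2 M) $ j $$ k =
          (if 1 \<le> j then M i (j - 1) else 0) - (if 1 \<le> i then M (i - 1) j else 0)"
    proof -
      have "((fps_X - fps_const fls_X) * iota2 M) $ j = (fps_X * iota2 M) $ j - fls_X * iota2 M $ j"
        by (simp add: algebra_simps fps_mult_left_const_nth)
      moreover have "(fls_X * iota2 M $ j) $$ int i = (if 1 \<le> i then M (i - 1) j else 0)"
        by (auto simp: fls_X_times_conv_shift iota2_nth nat_diff_distrib)
      moreover have "(fps_X * iota2 M) $ j $$ int i = (if 1 \<le> j then M i (j - 1) else 0)"
        by (auto simp: fps_X_mult_nth)
      ultimately show ?thesis by (simp add: k)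
    qed
    show ?thesis using L R bil by simp
  qed
qed

lemma Lg_exp:
  fixes u :: "'a::field_char_0 fps"
  assumes u0: "u $ 0 = 0"
  shows "fps_exp 1 oo (- (fps_ln 1 oo (- u))) = inverse (1 - u)"
proof -
  have "fps_exp 1 oo (- (fps_ln 1 oo (- u))) = inverse (fps_exp 1 oo (fps_ln 1 oo (- u)))"
    by (rule exp_compose_minus) simp
  also have "fps_exp 1 oo (fps_ln 1 oo (- u)) = 1 + - u"
    by (rule exp_ln_compose) (simp add: u0)
  finally show ?thesis by simp
qed

lemma neg_power_nth:
  fixes u :: "'a::comm_ring_1 fps"
  shows "((- u) ^ j) $ n = (- 1) ^ j * (u ^ j) $ n"
proof -
  have "- u = fps_const (- 1) * u" by (simp add: fps_eq_iff)
  then have "(- u) ^ j = fps_const ((- 1) ^ j) * u ^ j"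
    by (simp add: power_mult_distrib fps_const_power)
  then show ?thesis by (simp add: fps_mult_left_const_nth)
qed

lemma Lg_nth:
  fixes u :: "'a::field_char_0 fps"
  shows "(- (fps_ln 1 oo (- u))) $ n = (\<Sum>j=1..n. (u ^ j) $ n / of_nat j)"
proof -
  have "(- (fps_ln 1 oo (- u))) $ n = - (\<Sum>j=0..n. fps_ln 1 $ j * ((- u) ^ j) $ n)"
    by (simp add: fps_compose_nth)
  also have "\<dots> = - (\<Sum>j=1..n. fps_ln 1 $ j * ((- u) ^ j) $ n)"
    by (subst sum.atLeast_Suc_atMost[OF le0]) simp
  also have "\<dots> = (\<Sum>j=1..n. (u ^ j) $ n / of_nat j)"
    unfolding sum_negf[symmetric]
  proof (intro sum.cong refl)
    fix j assume "j \<in> {1..n}"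
    then obtain i where j: "j = Suc i" by (cases j) auto
    have m: "(- 1 :: 'a) ^ i * (- 1) ^ i = 1"
      by (simp flip: power_add)
    have h1: "fps_ln 1 $ j = (- 1) ^ i / of_nat j" by (simp add: j fps_ln_nth)
    have h2: "((- u) ^ j) $ n = - ((- 1) ^ i * (u ^ j) $ n)"
      unfolding neg_power_nth j by simp
    have "- (fps_ln 1 $ j * ((- u) ^ j) $ n) = ((- 1) ^ i * (- 1) ^ i) * (u ^ j) $ n / of_nat j"
      unfolding h1 h2 by (simp add: divide_inverse ac_simps)
    then show "- (fps_ln 1 $ j * ((- u) ^ j) $ n) = (u ^ j) $ n / of_nat j"
      unfolding m by simp
  qed
  finally show ?thesis .
qed

lemma lagrange_core:
  fixes E A :: "real fps" and G :: "nat \<Rightarrow> nat \<Rightarrow> real" and n :: nat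
  assumes A0: "A $ 0 = 0" and EA: "E = fps_exp 1 oo A" and G0: "\<forall>i. G i 0 = 0"
    and bil: "\<forall>i j. (if j = 1 then E $ i else 0) - (if i = 1 then E $ j else 0) =
      (if 1 \<le> j then bexp G i (j - 1) else 0) - (if 1 \<le> i then bexp G (i - 1) j else 0)"
    and n: "1 \<le> n"
  shows "fls_X_inv ^ n + fls_const (of_nat n * A $ n) - fps_to_fls (Abs_fps (\<lambda>i. of_nat n * G i n)) =
     (\<Sum>j=1..n. fls_const (of_nat n / of_nat j * ((fps_X * inverse E) ^ j) $ n) * (fls_X_inv * fps_to_fls E) ^ j)"
proof -
  define c :: "real fls" where "c = fls_X_inv"
  define kz where "kz = c * fps_to_fls E"
  define g where "g = fps_X * inverse E"
  define U where "U = fps_const kz * iota g"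
  define S where "S = iota2 G"
  define Mh where "Mh = iota2 (bexp G)"
  define cX where "cX = fps_const c * (fps_X :: real fls fps)"
  define Lg where "Lg u = - (fps_ln 1 oo (- u))" for u :: "real fls fps"
  have E0: "E $ 0 = 1" by (simp add: EA)
  have S0: "S $ 0 = 0" using G0 by (simp add: S_def iota2_def fps_eq_iff)
  have U0: "U $ 0 = 0" by (simp add: U_def g_def fps_mult_left_const_nth)
  have cX0: "cX $ 0 = 0" by (simp add: cX_def fps_mult_left_const_nth)
  have Mh_exp: "Mh = fps_exp 1 oo S" by (simp add: Mh_def S_def iota2_bexp G0)
  have Mh0: "Mh $ 0 = 1" by (simp add: Mh_exp)
  have bilR: "fps_X * fps_const (fps_to_fls E) - fps_const fls_X * iota E = (fps_X - fps_const fls_X) * Mh"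
    unfolding Mh_def by (rule bil_R[OF bil])
  have iE: "iota E = fps_exp 1 oo iota A" using iota_exp[OF A0] EA by simp
  have Eg: "E * g = fps_X" using E0 by (simp add: g_def inverse_mult_eq_1' mult.left_commute)
  have cfX: "c * fls_X = 1" unfolding c_def by (rule fls_eqI) (simp add: fls_X_inv_times_conv_shift)
  have step4: "iota E * (1 - U) = (1 - cX) * Mh"
  proof -
    have "iota E * U = fps_const kz * iota (E * g)" by (simp add: U_def ac_simps)
    then have l: "iota E * (1 - U) = iota E - fps_const kz * fps_X" by (simp add: Eg algebra_simps)
    have cc: "fps_const c * fps_const fls_X = 1" by (metis cfX fps_const_mult fps_const_1_eq_1)
    have "fps_const c * (fps_const fls_X - fps_X) = fps_const c * fps_const fls_X - cX"
      by (simp add: cX_def right_diff_distrib)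
    then have "1 - cX = fps_const c * (fps_const fls_X - fps_X)" unfolding cc by (rule sym)
    then have "(1 - cX) * Mh = fps_const c * ((fps_const fls_X - fps_X) * Mh)" by (simp add: ac_simps)
    also have "(fps_const fls_X - fps_X) * Mh = - ((fps_X - fps_const fls_X) * Mh)" by (simp add: algebra_simps)
    also have "\<dots> = fps_const fls_X * iota E - fps_X * fps_const (fps_to_fls E)"
      by (simp flip: bilR)
    finally have "(1 - cX) * Mh = fps_const (c * fls_X) * iota E - fps_X * fps_const (c * fps_to_fls E)"
      by (simp add: algebra_simps flip: fps_const_mult)
    moreover have cfX': "fls_X * c = 1" by (metis cfX mult.commute)
    ultimately show ?thesis using l by (simp add: cfX kz_def)
  qed
  have expLgU: "fps_exp 1 oo Lg U = inverse (1 - U)" unfolding Lg_def by (rule Lg_exp[OF U0])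
  define V' where "V' = Lg cX + iota A - S"
  have V'0: "V' $ 0 = 0" using S0 A0 by (simp add: V'_def Lg_def)
  have LgU0: "Lg U $ 0 = 0" by (simp add: Lg_def)
  have "fps_exp 1 oo V' = (fps_exp 1 oo (Lg cX + iota A)) * (fps_exp 1 oo (- S))"
    unfolding V'_def using exp_compose_add[of "Lg cX + iota A" "- S"] S0 A0
    by (simp add: Lg_def)
  also have "\<dots> = inverse (1 - cX) * iota E * inverse Mh"
    using exp_compose_add[of "Lg cX" "iota A"] A0 S0
    by (simp add: Lg_def Lg_exp[OF cX0] iE exp_compose_minus Mh_exp)
  also have "\<dots> = inverse (1 - U)"
  proof (rule sym, rule fps_inverse_unique)
    have a: "inverse (1 - cX) * (1 - cX) = 1" using cX0 by (simp add: inverse_mult_eq_1)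
    have b: "inverse Mh * Mh = 1" using Mh0 by (simp add: inverse_mult_eq_1)
    have "(1 - U) * (inverse (1 - cX) * iota E * inverse Mh) = inverse (1 - cX) * inverse Mh * (iota E * (1 - U))"
      by (simp add: ac_simps)
    also have "\<dots> = (inverse (1 - cX) * (1 - cX)) * (inverse Mh * Mh)" by (simp add: step4 ac_simps)
    finally show "(1 - U) * (inverse (1 - cX) * iota E * inverse Mh) = 1" by (simp add: a b)
  qed
  finally have expV': "fps_exp 1 oo V' = inverse (1 - U)" .
  have LgV: "Lg U = V'"
  proof -
    have "Lg U = fps_ln 1 oo ((fps_exp 1 oo Lg U) - 1)" by (rule ln_exp_compose[OF LgU0, symmetric])
    also have "\<dots> = fps_ln 1 oo ((fps_exp 1 oo V') - 1)" by (simp add: expLgU expV')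
    also have "\<dots> = V'" by (rule ln_exp_compose[OF V'0])
    finally show ?thesis .
  qed
  have Upow: "(U ^ j) $ n = kz ^ j * fls_const ((g ^ j) $ n)" for j
    by (simp add: U_def power_mult_distrib fps_const_power fps_mult_left_const_nth flip: iota_power)
  have LgUn: "Lg U $ n = (\<Sum>j=1..n. kz ^ j * fls_const ((g ^ j) $ n) / of_nat j)"
    unfolding Lg_def Lg_nth Upow ..
  have LgcXn: "Lg cX $ n = c ^ n / of_nat n"
  proof -
    have "Lg cX $ n = (\<Sum>j=1..n. (cX ^ j) $ n / of_nat j)" unfolding Lg_def Lg_nth ..
    also have "\<dots> = (\<Sum>j\<in>{n}. (cX ^ j) $ n / of_nat j)"
      by (rule sum.mono_neutral_right) (use n in \<open>auto simp: cX_def power_mult_distrib fps_const_power fps_mult_left_const_nth\<close>)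
    finally show ?thesis by (simp add: cX_def power_mult_distrib fps_const_power fps_mult_left_const_nth)
  qed
  have V'n: "V' $ n = c ^ n / of_nat n + fls_const (A $ n) - fps_to_fls (Abs_fps (\<lambda>i. G i n))"
    by (simp add: V'_def LgcXn S_def iota2_def)
  have nz: "(of_nat n :: real fls) \<noteq> 0" using n by simp
  have "fls_X_inv ^ n + fls_const (of_nat n * A $ n) - fps_to_fls (Abs_fps (\<lambda>i. of_nat n * G i n))
      = of_nat n * V' $ n"
  proof -
    have "fps_to_fls (Abs_fps (\<lambda>i. of_nat n * G i n)) = fls_const (of_nat n) * fps_to_fls (Abs_fps (\<lambda>i. G i n))"
      by (rule fls_eqI) simp
    then show ?thesis using nz
      by (simp add: V'n c_def algebra_simps fls_of_nat flip: fls_const_mult_const)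
  qed
  also have "\<dots> = of_nat n * Lg U $ n" by (simp add: LgV)
  also have "\<dots> = (\<Sum>j=1..n. fls_const (of_nat n / of_nat j * (g ^ j) $ n) * kz ^ j)"
    unfolding LgUn sum_distrib_left
  proof (intro sum.cong refl)
    fix j assume "j \<in> {1..n}"
    then have "(of_nat j :: real) \<noteq> 0" by auto
    then show "of_nat n * (kz ^ j * fls_const ((g ^ j) $ n) / of_nat j) =
        fls_const (of_nat n / of_nat j * (g ^ j) $ n) * kz ^ j"
      by (simp add: fls_of_nat divide_inverse fls_inverse_const ac_simps flip: fls_const_mult_const)
  qed
  finally show ?thesis by (simp add: g_def kz_def c_def)
qed





definition gE :: "real fps \<Rightarrow> real fps" where "gE E = fps_X * inverse E"
definition kzE :: "real fps \<Rightarrow> real fls" where "kzE E = fls_X_inv * fps_to_fls E"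
definition CE :: "real fps \<Rightarrow> real fls \<Rightarrow> real fls" where "CE E f = fls_compose_fps f (gE E)"

definition nonneg :: "real fls \<Rightarrow> bool" where "nonneg f \<longleftrightarrow> (\<forall>m<0. f $$ m = 0)"

lemma nonneg_add: "nonneg f \<Longrightarrow> nonneg h \<Longrightarrow> nonneg (f + h)"
  and nonneg_diff: "nonneg f \<Longrightarrow> nonneg h \<Longrightarrow> nonneg (f - h)"
  and nonneg_fps: "nonneg (fps_to_fls a)"
  and nonneg_const: "nonneg (fls_const c)"
  by (auto simp: nonneg_def)

context
  fixes E :: "real fps"
  assumes E0: "E $ 0 = 1"
begin

lemma gE0: "gE E $ 0 = 0" by (simp add: gE_def)
lemma gE1: "gE E $ 1 = 1" using E0 by (simp add: gE_def)
lemma gE_nz: "gE E \<noteq> 0" using gE1 by auto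
lemma gE_subdeg: "subdegree (gE E) = 1"
  using gE0 gE1 by (intro subdegreeI) auto

lemma kz_g: "kzE E * fps_to_fls (gE E) = 1"
proof -
  have "kzE E * fps_to_fls (gE E) = (fls_X_inv * fls_X) * fps_to_fls (E * inverse E)"
    by (simp add: kzE_def gE_def fls_times_fps_to_fls ac_simps)
  also have "E * inverse E = 1" using E0 by (simp add: inverse_mult_eq_1')
  also have "fls_X_inv * (fls_X :: real fls) = 1" by (rule fls_eqI) (simp add: fls_X_inv_times_conv_shift)
  finally show ?thesis by simp
qed

lemma kz_nz: "kzE E \<noteq> 0" using kz_g by auto

lemma regpart_inv_kz: "fls_regpart (inverse (kzE E)) = gE E"
proof -
  have "inverse (kzE E) = fps_to_fls (gE E)"
    using kz_g by (metis inverse_unique)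
  then show ?thesis by simp
qed

lemma CE_add: "CE E (f + h) = CE E f + CE E h"
  using gE_nz gE0 by (simp add: CE_def fls_compose_fps_add)
lemma CE_diff: "CE E (f - h) = CE E f - CE E h"
  using gE_nz gE0 by (simp add: CE_def fls_compose_fps_diff)
lemma CE_mult: "CE E (f * h) = CE E f * CE E h"
  using gE_nz gE0 by (simp add: CE_def fls_compose_fps_mult)
lemma CE_power: "CE E (f ^ n) = CE E f ^ n"
  using gE_nz gE0 by (simp add: CE_def fls_compose_fps_power)
lemma CE_const: "CE E (fls_const c) = fls_const c"
  by (simp add: CE_def)
lemma CE_uminus: "CE E (- f) = - CE E f"
  by (simp add: CE_def)
lemma CE_sum: "CE E (\<Sum>j\<in>A. f j) = (\<Sum>j\<in>A. CE E (f j))"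
proof (induction A rule: infinite_finite_induct)
  case (insert x F)
  then show ?case by (simp add: CE_add)
qed (auto simp: CE_def)
lemma CE_fps: "CE E (fps_to_fls a) = fps_to_fls (a oo gE E)"
  using gE_nz gE0 by (simp add: CE_def)
lemma CE_X: "CE E fls_X = fps_to_fls (gE E)"
  by (simp add: CE_def)
lemma CE_X_inv: "CE E fls_X_inv = kzE E"
proof -
  have "CE E fls_X_inv = CE E (inverse fls_X)" by (simp add: fls_inverse_X)
  also have "\<dots> = inverse (fps_to_fls (gE E))"
    using gE_nz gE0 by (simp add: CE_def fls_compose_fps_inverse)
  also have "\<dots> = kzE E" using kz_g by (metis inverse_unique mult.commute)
  finally show ?thesis .
qed
lemma CE_inj: "CE E f = CE E h \<Longrightarrow> f = h"
  using gE_nz gE0 fls_compose_fps_eq_0_iff[of "gE E" "f - h"] by (simp add: CE_def fls_compose_fps_diff)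
lemma CE_subdeg: "fls_subdegree (CE E f) = fls_subdegree f"
  using gE0 gE_subdeg by (simp add: CE_def)
lemma CE_nonneg: "nonneg f \<Longrightarrow> nonneg (CE E f)"
proof -
  assume "nonneg f"
  then have "fps_to_fls (fls_regpart f) = f"
    by (intro fls_regpart_to_fls_trivial fls_subdegree_ge0I) (auto simp: nonneg_def)
  then have "CE E f = fps_to_fls (fls_regpart f oo gE E)" by (metis CE_fps)
  then show ?thesis by (simp add: nonneg_fps)
qed

lemma kz_pow_nth: "(kzE E ^ j) $$ m = (if m + int j < 0 then 0 else (E ^ j) $ nat (m + int j))"
  by (simp add: kzE_def power_mult_distrib fls_X_inv_power_times_conv_shift fps_to_fls_power[symmetric])

lemma poly_kz_zero:
  assumes nn: "nonneg (\<Sum>j=1..n. fls_const (e j) * kzE E ^ j)"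
  shows "\<forall>j\<in>{1..n}. e j = 0"
proof (rule ccontr)
  assume "\<not> (\<forall>j\<in>{1..n}. e j = 0)"
  then have ne: "{j\<in>{1..n}. e j \<noteq> 0} \<noteq> {}" by auto
  define J where "J = Max {j\<in>{1..n}. e j \<noteq> 0}"
  have J: "J \<in> {j\<in>{1..n}. e j \<noteq> 0}" unfolding J_def by (rule Max_in) (use ne in auto)
  have Jmax: "j \<in> {1..n} \<Longrightarrow> J < j \<Longrightarrow> e j = 0" for j
  proof (rule ccontr)
    assume "j \<in> {1..n}" "J < j" "e j \<noteq> 0"
    then have "j \<le> J" unfolding J_def by (intro Max_ge) auto
    then show False using \<open>J < j\<close> by simp
  qed
  have "(\<Sum>j=1..n. fls_const (e j) * kzE E ^ j) $$ (- int J) = (\<Sum>j=1..n. e j * (kzE E ^ j) $$ (- int J))"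
    by (simp add: fls_nth_sum)
  also have "\<dots> = (\<Sum>j\<in>{J}. e j * (kzE E ^ j) $$ (- int J))"
  proof (rule sum.mono_neutral_right)
    show "\<forall>j\<in>{1..n} - {J}. e j * (kzE E ^ j) $$ (- int J) = 0"
    proof
      fix j assume j: "j \<in> {1..n} - {J}"
      show "e j * (kzE E ^ j) $$ (- int J) = 0"
      proof (cases "j < J")
        case True then show ?thesis by (simp add: kz_pow_nth)
      next
        case False then show ?thesis using j Jmax by auto
      qed
    qed
  qed (use J in auto)
  also have "\<dots> = e J" using E0 by (simp add: kz_pow_nth fps_power_zeroth)
  finally have "(\<Sum>j=1..n. fls_const (e j) * kzE E ^ j) $$ (- int J) = e J" .
  moreover have "- int J < 0" using J by auto
  ultimately show False using nn J by (auto simp: nonneg_def)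
qed

end


lemma fls_const_diff': "fls_const (a - b) = fls_const a - (fls_const b :: real fls)"
  by (rule fls_eqI) simp

lemma pospart_nth: "pospart f $$ m = (if m < 0 then f $$ m else 0)"
  unfolding pospart_def
  by (rule nth_Abs_fls_ex_lower_bound) (auto intro: exI[of _ "fls_subdegree f"])

lemma Bn_formula:
  fixes E A :: "real fps" and G :: "nat \<Rightarrow> nat \<Rightarrow> real" and n :: nat and Lx :: "real fls"
  assumes A0: "A $ 0 = 0" and EA: "E = fps_exp 1 oo A" and G0: "\<forall>i. G i 0 = 0"
    and bil: "\<forall>i j. (if j = 1 then E $ i else 0) - (if i = 1 then E $ j else 0) =
      (if 1 \<le> j then bexp G i (j - 1) else 0) - (if 1 \<le> i then bexp G (i - 1) j else 0)"
    and n: "1 \<le> n" and CL: "CE E Lx = fls_X_inv"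
  shows "CE E (pospart (Lx ^ n)) =
    fls_X_inv ^ n + fls_const (of_nat n * A $ n) - fps_to_fls (Abs_fps (\<lambda>i. of_nat n * G i n))"
proof -
  have E0: "E $ 0 = 1" by (simp add: EA)
  have Lnz: "Lx \<noteq> 0" using CL by (auto simp: CE_def)
  have "fls_subdegree Lx = -1" using CE_subdeg[OF E0, of Lx] CL by simp
  then have sdn: "fls_subdegree (Lx ^ n) = - int n" by (simp add: fls_subdegree_pow)
  define c where "c j = (Lx ^ n) $$ (- int j)" for j
  have pp: "pospart (Lx ^ n) = (\<Sum>j=1..n. fls_const (c j) * fls_X_inv ^ j)"
  proof (rule fls_eqI)
    fix m :: int
    have r: "(\<Sum>j=1..n. fls_const (c j) * fls_X_inv ^ j) $$ m = (\<Sum>j=1..n. if m = - int j then c j else 0)"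
      by (simp add: fls_nth_sum) (intro sum.cong refl; simp)
    show "pospart (Lx ^ n) $$ m = (\<Sum>j=1..n. fls_const (c j) * fls_X_inv ^ j) $$ m"
    proof (cases "m < 0 \<and> - int n \<le> m")
      case True
      define j where "j = nat (- m)"
      have j: "m = - int j" "1 \<le> j" "j \<le> n" using True by (auto simp: j_def)
      have "(\<Sum>i=1..n. if m = - int i then c i else 0) = (\<Sum>i\<in>{j}. if m = - int i then c i else 0)"
        by (rule sum.mono_neutral_right) (use j in auto)
      then show ?thesis unfolding r using j by (simp add: pospart_nth c_def)
    next
      case False
      have "(\<Sum>i=1..n. if m = - int i then c i else 0) = 0"
        by (rule sum.neutral) (use False in auto)
      moreover have "pospart (Lx ^ n) $$ m = 0"
        using False sdn by (auto simp: pospart_nth)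
      ultimately show ?thesis unfolding r by simp
    qed
  qed
  have Cpp: "CE E (pospart (Lx ^ n)) = (\<Sum>j=1..n. fls_const (c j) * kzE E ^ j)"
    unfolding pp using E0 by (simp add: CE_sum CE_mult CE_const CE_power CE_X_inv)
  have nn1: "nonneg (Lx ^ n - pospart (Lx ^ n))" by (simp add: nonneg_def pospart_nth)
  have nn2: "nonneg (fls_X_inv ^ n - CE E (pospart (Lx ^ n)))"
    using CE_nonneg[OF E0 nn1] by (simp add: CE_diff[OF E0] CE_power[OF E0] CL)
  define \<beta> where "\<beta> = fls_X_inv ^ n + fls_const (of_nat n * A $ n) - fps_to_fls (Abs_fps (\<lambda>i. of_nat n * G i n))"
  define d where "d j = of_nat n / of_nat j * ((fps_X * inverse E) ^ j) $ n" for j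
  have \<beta>: "\<beta> = (\<Sum>j=1..n. fls_const (d j) * kzE E ^ j)"
    unfolding \<beta>_def d_def kzE_def by (rule lagrange_core[OF A0 EA G0 bil n])
  have nn3: "nonneg (fls_X_inv ^ n - \<beta>)"
    unfolding \<beta>_def by (simp add: nonneg_def)
  have "nonneg ((fls_X_inv ^ n - \<beta>) - (fls_X_inv ^ n - CE E (pospart (Lx ^ n))))"
    by (rule nonneg_diff[OF nn3 nn2])
  also have "(fls_X_inv ^ n - \<beta>) - (fls_X_inv ^ n - CE E (pospart (Lx ^ n))) =
      (\<Sum>j=1..n. fls_const (c j - d j) * kzE E ^ j)"
    unfolding Cpp \<beta> by (simp add: fls_const_diff' left_diff_distrib sum_subtractf)
  finally have "\<forall>j\<in>{1..n}. c j - d j = 0" by (rule poly_kz_zero[OF E0])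
  then have "CE E (pospart (Lx ^ n)) = \<beta>" unfolding Cpp \<beta> by (intro sum.cong refl) auto
  then show ?thesis by (simp add: \<beta>_def)
qed





lemma kderiv_nth: "kderiv f $$ m = of_int (1 - m) * f $$ (m - 1)"
  unfolding kderiv_def
  by (rule nth_Abs_fls_ex_lower_bound) (auto intro: exI[of _ "fls_subdegree f + 1"])

lemma Xi_pow_fps_nth: "(fls_X_inv ^ K * fps_to_fls F) $$ m = (if m + int K < 0 then 0 else F $ nat (m + int K))"
  by (simp add: fls_X_inv_power_times_conv_shift)

lemma kderiv_rep:
  "kderiv (fls_X_inv ^ K * fps_to_fls F) =
     of_nat K * fls_X * (fls_X_inv ^ K * fps_to_fls F) - fls_X ^ 2 * (fls_X_inv ^ K * fps_to_fls (fps_deriv F))"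
proof (rule fls_eqI)
  fix m :: int
  have a: "(of_nat K * fls_X * y) $$ m' = of_nat K * y $$ (m' - 1)" for y :: "real fls" and m'
  proof -
    have "(of_nat K * fls_X * y) = fls_const (real K) * (fls_X * y)" by (simp add: fls_of_nat mult.assoc)
    then show ?thesis by (simp only: fls_mult_const_nth) (simp add: fls_X_times_conv_shift)
  qed
  have b: "(fls_X ^ 2 * y) $$ m' = y $$ (m' - 2)" for y :: "real fls" and m'
    by (simp add: fls_X_power_times_conv_shift)
  show "kderiv (fls_X_inv ^ K * fps_to_fls F) $$ m = (of_nat K * fls_X * (fls_X_inv ^ K * fps_to_fls F) -
        fls_X ^ 2 * (fls_X_inv ^ K * fps_to_fls (fps_deriv F))) $$ m"
  proof (cases "m - 1 + int K < 0")
    case True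
    then show ?thesis by (simp add: kderiv_nth a b Xi_pow_fps_nth)
  next
    case False
    define j where "j = nat (m - 1 + int K)"
    have mj: "m = int j + 1 - int K" using False by (simp add: j_def)
    show ?thesis
    proof (cases j)
      case 0
      then show ?thesis by (simp add: kderiv_nth a b Xi_pow_fps_nth mj)
    next
      case (Suc i)
      have e: "nat (int (Suc i) + 1 - int K - 2 + int K) = i" by simp
      show ?thesis
        by (simp add: kderiv_nth a b Xi_pow_fps_nth mj Suc e del: of_nat_Suc) (simp add: algebra_simps)
    qed
  qed
qed


lemma rep_fls:
  assumes "\<forall>m < - int K. f $$ m = 0"
  shows "f = fls_X_inv ^ K * fps_to_fls (Abs_fps (\<lambda>n. f $$ (int n - int K)))"
proof (rule fls_eqI)
  fix m show "f $$ m = (fls_X_inv ^ K * fps_to_fls (Abs_fps (\<lambda>n. f $$ (int n - int K)))) $$ m"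
    using assms by (auto simp: Xi_pow_fps_nth)
qed

lemma fder_fls:
  assumes f: "\<forall>h. f h = fls_X_inv ^ K * fps_to_fls (T h)" and T: "fder T T' t"
  shows "((\<lambda>h. f h $$ m) has_real_derivative (fls_X_inv ^ K * fps_to_fls T') $$ m) (at t)"
proof (cases "m + int K < 0")
  case True then show ?thesis by (simp add: f Xi_pow_fps_nth)
next
  case False then show ?thesis using fderD[OF T] by (simp add: f Xi_pow_fps_nth)
qed

lemma fder_fls_Abs:
  assumes f: "\<forall>h. f h = fls_X_inv ^ K * fps_to_fls (T h)" and T: "fder T T' t"
  shows "Abs_fls (\<lambda>m. deriv (\<lambda>h. f h $$ m) t) = fls_X_inv ^ K * fps_to_fls T'"
proof -
  have "(\<lambda>m. deriv (\<lambda>h. f h $$ m) t) = (\<lambda>m. (fls_X_inv ^ K * fps_to_fls T') $$ m)"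
    using fder_fls[OF f T] DERIV_imp_deriv by blast
  then show ?thesis by (simp add: fls_nth_inverse)
qed

lemma CE_rep:
  assumes E0: "E $ 0 = 1"
  shows "CE E (fls_X_inv ^ K * fps_to_fls F) = fls_X_inv ^ K * fps_to_fls (E ^ K * (F oo gE E))"
  using E0 by (simp add: CE_mult CE_power CE_X_inv CE_fps kzE_def power_mult_distrib
      fls_times_fps_to_fls fps_to_fls_power ac_simps)


lemma chain:
  fixes E :: "real \<Rightarrow> real fps" and E' :: "real fps" and f :: "real \<Rightarrow> real fls"
    and W :: "real \<Rightarrow> real fps" and W' :: "real fps" and K :: nat
  assumes E0: "\<forall>h. E h $ 0 = 1" and dE: "fder E E' t"
    and fb: "\<forall>h. \<forall>m < - int K. f h $$ m = 0"
    and hW: "\<forall>h. CE (E h) (f h) = fls_X_inv ^ K * fps_to_fls (W h)" and dW: "fder W W' t"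
  shows "\<forall>m. (\<lambda>h. f h $$ m) differentiable (at t)"
    and "CE (E t) (Abs_fls (\<lambda>m. deriv (\<lambda>h. f h $$ m) t)) =
           fls_X_inv ^ K * fps_to_fls W' - CE (E t) (kderiv (f t)) * (fls_X_inv * fps_to_fls E')"
proof -
  define fh where "fh h = Abs_fps (\<lambda>n. f h $$ (int n - int K))" for h
  have frep: "\<forall>h. f h = fls_X_inv ^ K * fps_to_fls (fh h)"
  proof
    fix h show "f h = fls_X_inv ^ K * fps_to_fls (fh h)"
      unfolding fh_def by (rule rep_fls) (use fb in blast)
  qed
  define Ei where "Ei h = inverse (E h)" for h
  define g where "g h = gE (E h)" for h
  have dEi: "fder Ei (- E' * Ei t ^ 2) t"
    using fder_inverse[OF dE E0] by (simp add: Ei_def[abs_def])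
  have gX: "g h = fps_X * Ei h" for h by (simp add: g_def gE_def Ei_def)
  have dg: "fder g (fps_X * (- E' * Ei t ^ 2)) t"
    using fder_mult[OF fder_const dEi, of fps_X] by (simp add: gX[abs_def])
  have g0: "\<forall>h. g h $ 0 = 0" using gE0 E0 by (simp add: g_def)
  have g1: "\<forall>h. g h $ 1 = 1" using gE1 E0 by (simp add: g_def)
  have EEi: "E h * Ei h = 1" for h using E0 by (simp add: Ei_def inverse_mult_eq_1')
  have comp: "fh h oo g h = Ei h ^ K * W h" for h
  proof -
    have "fls_X_inv ^ K * fps_to_fls (E h ^ K * (fh h oo g h)) = fls_X_inv ^ K * fps_to_fls (W h)"
      using hW CE_rep[of "E h" K "fh h"] E0 frep by (simp add: g_def)
    then have "E h ^ K * (fh h oo g h) = W h" by simp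
    then have "Ei h ^ K * (E h ^ K * (fh h oo g h)) = Ei h ^ K * W h" by simp
    moreover have "Ei h ^ K * E h ^ K = 1" using EEi by (metis mult.commute power_mult_distrib power_one)
    ultimately show ?thesis by (simp add: mult.assoc[symmetric])
  qed
  define u' where "u' = of_nat K * Ei t ^ (K - 1) * (- E' * Ei t ^ 2) * W t + Ei t ^ K * W'"
  have du: "fder (\<lambda>h. Ei h ^ K * W h) u' t"
    unfolding u'_def using fder_mult[OF fder_power[OF dEi] dW] by simp
  have "fdiff fh t"
    by (rule fder_compose_inv[OF dg g0 g1]) (use fder_fdiff[OF du] comp in simp)
  then obtain fh' where dfh: "fder fh fh' t" using fdiff_fder by blast
  have "fder (\<lambda>h. fh h oo g h) ((fh' oo g t) + (fps_deriv (fh t) oo g t) * (fps_X * (- E' * Ei t ^ 2))) t"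
    by (rule fder_compose[OF dfh dg g0])
  moreover have "fder (\<lambda>h. fh h oo g h) u' t" using du comp by simp
  ultimately have u'eq: "(fh' oo g t) + (fps_deriv (fh t) oo g t) * (fps_X * (- E' * Ei t ^ 2)) = u'"
    by (rule fder_unique)
  show "\<forall>m. (\<lambda>h. f h $$ m) differentiable (at t)"
    using fder_fls[OF frep dfh] real_differentiable_def by blast
  have f'eq: "Abs_fls (\<lambda>m. deriv (\<lambda>h. f h $$ m) t) = fls_X_inv ^ K * fps_to_fls fh'"
    by (rule fder_fls_Abs[OF frep dfh])
  have E0t: "E t $ 0 = 1" using E0 by simp
  have CKd: "CE (E t) (kderiv (f t)) =
      of_nat K * fps_to_fls (g t) * (fls_X_inv ^ K * fps_to_fls (E t ^ K * (fh t oo g t))) -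
      fps_to_fls (g t) ^ 2 * (fls_X_inv ^ K * fps_to_fls (E t ^ K * (fps_deriv (fh t) oo g t)))"
  proof -
    have kd: "kderiv (f t) = of_nat K * fls_X * (fls_X_inv ^ K * fps_to_fls (fh t)) -
        fls_X ^ 2 * (fls_X_inv ^ K * fps_to_fls (fps_deriv (fh t)))"
      using frep kderiv_rep by metis
    have c1: "CE (E t) (of_nat K * fls_X) = of_nat K * fps_to_fls (g t)"
      using E0t by (simp add: CE_mult CE_X fls_of_nat CE_const g_def)
    have c2: "CE (E t) (fls_X ^ 2) = fps_to_fls (g t) ^ 2"
      using E0t by (simp add: CE_power CE_X g_def)
    show ?thesis unfolding kd CE_diff[OF E0t]
      CE_mult[OF E0t, of "of_nat K * fls_X" "fls_X_inv ^ K * fps_to_fls (fh t)"]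
      CE_mult[OF E0t, of "fls_X ^ 2" "fls_X_inv ^ K * fps_to_fls (fps_deriv (fh t))"]
      CE_rep[OF E0t] c1 c2 g_def ..
  qed
  have CL: "CE (E t) (Abs_fls (\<lambda>m. deriv (\<lambda>h. f h $$ m) t)) =
      fls_X_inv ^ K * fps_to_fls (E t ^ K * (fh' oo g t))"
    unfolding f'eq using E0t by (simp add: CE_rep g_def)
  have fh'g: "fh' oo g t = u' - (fps_deriv (fh t) oo g t) * (fps_X * (- E' * Ei t ^ 2))"
    using u'eq by (simp add: algebra_simps)
  define e where "e = fps_to_fls (E t)"
  define ei where "ei = fps_to_fls (Ei t)"
  define ep where "ep = fps_to_fls E'"
  define w where "w = fps_to_fls (W t)"
  define wp where "wp = fps_to_fls W'"
  define fd where "fd = fps_to_fls (fps_deriv (fh t) oo g t)"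
  define X :: "real fls" where "X = fls_X"
  define Xi :: "real fls" where "Xi = fls_X_inv"
  define k :: "real fls" where "k = of_nat K"
  define P where "P = e ^ K"
  define Q where "Q = ei ^ K"
  define Q1 where "Q1 = ei ^ (K - 1)"
  define R where "R = Xi ^ K"
  have r1: "e * ei = 1" unfolding e_def ei_def using EEi[of t] by (metis fls_times_fps_to_fls fps_to_fls_eq_1_iff)
  have r2: "X * Xi = 1" unfolding X_def Xi_def by (rule fls_eqI) (simp add: fls_X_times_conv_shift)
  have r3: "P * Q = 1" unfolding P_def Q_def using r1 by (metis power_mult_distrib power_one)
  have r4: "k * Q1 * ei = k * Q"
  proof (cases K)
    case 0 then show ?thesis by (simp add: k_def)
  next
    case (Suc K') then show ?thesis by (simp add: Q1_def Q_def mult.assoc)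
  qed
  have G: "fps_to_fls (g t) = X * ei" by (simp add: gX X_def ei_def fls_times_fps_to_fls)
  have L1: "CE (E t) (Abs_fls (\<lambda>m. deriv (\<lambda>h. f h $$ m) t)) =
      R * (P * ((k * Q1 * (- ep * ei ^ 2) * w + Q * wp) - fd * (X * (- ep * ei ^ 2))))"
    unfolding CL fh'g u'_def
    by (simp add: R_def Xi_def P_def e_def Q1_def ei_def Q_def ep_def w_def wp_def fd_def X_def k_def
        fls_times_fps_to_fls fps_to_fls_power fls_of_nat)
  have L2: "CE (E t) (kderiv (f t)) = k * (X * ei) * (R * (P * (Q * w))) - (X * ei) ^ 2 * (R * (P * fd))"
    unfolding CKd G comp
    by (simp add: R_def Xi_def P_def e_def Q_def ei_def w_def fd_def k_def
        fls_times_fps_to_fls fps_to_fls_power)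
  have "R * (P * ((k * Q1 * (- ep * ei ^ 2) * w + Q * wp) - fd * (X * (- ep * ei ^ 2)))) =
        R * wp - (k * (X * ei) * (R * (P * (Q * w))) - (X * ei) ^ 2 * (R * (P * fd))) * (Xi * ep)"
    using r1 r2 r3 r4 by algebra
  then show "CE (E t) (Abs_fls (\<lambda>m. deriv (\<lambda>h. f h $$ m) t)) =
           fls_X_inv ^ K * fps_to_fls W' - CE (E t) (kderiv (f t)) * (fls_X_inv * fps_to_fls E')"
    unfolding L1 L2 by (simp add: R_def Xi_def wp_def ep_def)
qed





lemma smooth_pd: "smooth f \<Longrightarrow> smooth (pd j f)"
proof -
  assume s: "smooth f"
  have e: "iter_pd js (pd j f) = iter_pd (js @ [j]) f" for js by (simp add: iter_pd_def)
  show "smooth (pd j f)" using s unfolding smooth_def e by blast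
qed

lemma smooth_differentiable: "smooth f \<Longrightarrow> (\<lambda>h. f (x(j := h))) differentiable (at (x j))"
  unfolding smooth_def using iter_pd_def by (metis foldr.simps(1) id_apply)

lemma smooth_DERIV: "smooth f \<Longrightarrow> ((\<lambda>h. f (x(j := h))) has_real_derivative pd j f x) (at (x j))"
  unfolding pd_def using smooth_differentiable DERIV_deriv_iff_real_differentiable by blast

lemma smooth_DERIV': "smooth f \<Longrightarrow> ((\<lambda>h. f (x(j := h))) has_real_derivative pd j f (x(j := s))) (at s)"
  using smooth_DERIV[of f "x(j := s)" j] by simp

lemma smooth_cont:
  assumes "smooth f" "finite I"
  shows "continuous_on UNIV (\<lambda>y::pt. iter_pd js f (\<lambda>k. if k \<in> I then y k else x0 k))"
  using assms unfolding smooth_def by blast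

lemma mvt2d:
  assumes sf: "smooth f" and ij: "i \<noteq> j" and h: "0 < h"
  shows "\<exists>\<xi> \<eta>. x i < \<xi> \<and> \<xi> < x i + h \<and> x j < \<eta> \<and> \<eta> < x j + h \<and>
     f (x(i := x i + h, j := x j + h)) - f (x(i := x i + h)) - f (x(j := x j + h)) + f x
       = h ^ 2 * pd j (pd i f) (x(i := \<xi>, j := \<eta>))"
proof -
  define a where "a = x i"
  define b where "b = x j"
  define psf where "psf s = f (x(i := s, j := b + h)) - f (x(i := s))" for s
  define psf' where "psf' s = pd i f (x(i := s, j := b + h)) - pd i f (x(i := s))" for s
  have dpsf: "DERIV psf s :> psf' s" for s
  proof -
    have 1: "((\<lambda>s. f ((x(j := b + h))(i := s))) has_real_derivative pd i f ((x(j := b + h))(i := s))) (at s)"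
      by (rule smooth_DERIV'[OF sf])
    have 2: "((\<lambda>s. f (x(i := s))) has_real_derivative pd i f (x(i := s))) (at s)"
      by (rule smooth_DERIV'[OF sf])
    show ?thesis using DERIV_diff[OF 1 2] ij unfolding psf_def psf'_def by (simp add: fun_upd_twist)
  qed
  obtain \<xi> where \<xi>: "a < \<xi>" "\<xi> < a + h" "psf (a + h) - psf a = (a + h - a) * psf' \<xi>"
    using MVT2[of a "a + h" psf psf'] h dpsf by auto
  define chf where "chf r = pd i f (x(i := \<xi>, j := r))" for r
  have dchf: "DERIV chf r :> pd j (pd i f) (x(i := \<xi>, j := r))" for r
    unfolding chf_def using smooth_DERIV'[OF smooth_pd[OF sf], where x = "x(i := \<xi>)" and j = j and s = r and j1 = i] by simp
  obtain \<eta> where \<eta>: "b < \<eta>" "\<eta> < b + h" "chf (b + h) - chf b = (b + h - b) * pd j (pd i f) (x(i := \<xi>, j := \<eta>))"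
    using MVT2[of b "b + h" chf "\<lambda>r. pd j (pd i f) (x(i := \<xi>, j := r))"] h dchf by auto
  have "chf b = pd i f (x(i := \<xi>))" unfolding chf_def b_def using ij by (simp add: fun_upd_idem)
  then have "psf' \<xi> = chf (b + h) - chf b" unfolding psf'_def chf_def by simp
  moreover have "psf (a + h) - psf a = f (x(i := x i + h, j := x j + h)) - f (x(i := x i + h)) - f (x(j := x j + h)) + f x"
    unfolding psf_def a_def b_def using ij by (simp add: fun_upd_idem)
  ultimately have "f (x(i := x i + h, j := x j + h)) - f (x(i := x i + h)) - f (x(j := x j + h)) + f x
      = h ^ 2 * pd j (pd i f) (x(i := \<xi>, j := \<eta>))"
    using \<xi>(3) \<eta>(3) by (simp add: power2_eq_square)
  then show ?thesis using \<xi> \<eta> unfolding a_def b_def by blast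
qed


lemma squeeze_seq:
  fixes s :: "nat \<Rightarrow> real"
  assumes "\<forall>n. a < s n \<and> s n < a + inverse (real (Suc n))"
  shows "s \<longlonglongrightarrow> a"
proof (rule tendsto_sandwich[where f = "\<lambda>n. a" and h = "\<lambda>n. a + inverse (real (Suc n))"])
  show "\<forall>\<^sub>F n in sequentially. a \<le> s n" using assms by (intro always_eventually allI) (simp add: less_imp_le)
  show "\<forall>\<^sub>F n in sequentially. s n \<le> a + inverse (real (Suc n))"
    using assms by (intro always_eventually allI) (simp add: less_imp_le)
  show "(\<lambda>n. a + inverse (real (Suc n))) \<longlonglongrightarrow> a" by (rule LIMSEQ_inverse_real_of_nat_add)
qed simp

lemma slice_cont:
  assumes sf: "smooth f" and ij: "i \<noteq> j"
  shows "continuous_on UNIV (\<lambda>p::real \<times> real. pd j (pd i f) (x(i := fst p, j := snd p)))"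
proof -
  have c: "continuous_on UNIV (\<lambda>y::pt. iter_pd [j, i] f (\<lambda>k. if k \<in> {i, j} then y k else x k))"
    by (rule smooth_cont[OF sf]) simp
  have phi: "continuous_on UNIV (\<lambda>p::real \<times> real. x(i := fst p, j := snd p))"
  proof (rule continuous_on_coordinatewise_then_product)
    fix k
    show "continuous_on UNIV (\<lambda>p::real \<times> real. (x(i := fst p, j := snd p)) k)"
      by (cases "k = j"; cases "k = i") (auto intro!: continuous_intros)
  qed
  have eq: "(\<lambda>k. if k \<in> {i, j} then (x(i := fst p, j := snd p)) k else x k) = x(i := fst p, j := snd p)" for p
    by auto
  have "continuous_on UNIV (\<lambda>p::real \<times> real. iter_pd [j, i] f (\<lambda>k. if k \<in> {i, j} then (x(i := fst p, j := snd p)) k else x k))"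
    by (rule continuous_on_compose2[OF c phi]) auto
  then show ?thesis unfolding eq by (simp add: iter_pd_def)
qed

lemma schwarz:
  assumes sf: "smooth f"
  shows "pd i (pd j f) x = pd j (pd i f) x"
proof (cases "i = j")
  case True then show ?thesis by simp
next
  case False
  have "\<forall>n. \<exists>q. x i < fst q \<and> fst q < x i + inverse (real (Suc n)) \<and>
          x j < fst (snd q) \<and> fst (snd q) < x j + inverse (real (Suc n)) \<and>
          x j < fst (snd (snd q)) \<and> fst (snd (snd q)) < x j + inverse (real (Suc n)) \<and>
          x i < snd (snd (snd q)) \<and> snd (snd (snd q)) < x i + inverse (real (Suc n)) \<and>
          pd j (pd i f) (x(i := fst q, j := fst (snd q))) =
          pd i (pd j f) (x(j := fst (snd (snd q)), i := snd (snd (snd q))))"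
  proof
    fix n
    define h where "h = inverse (real (Suc n))"
    have h: "0 < h" by (simp add: h_def)
    obtain \<xi>1 \<eta>1 where 1: "x i < \<xi>1" "\<xi>1 < x i + h" "x j < \<eta>1" "\<eta>1 < x j + h"
      "f (x(i := x i + h, j := x j + h)) - f (x(i := x i + h)) - f (x(j := x j + h)) + f x
       = h ^ 2 * pd j (pd i f) (x(i := \<xi>1, j := \<eta>1))"
      using mvt2d[OF sf False h, of x] by blast
    obtain \<xi>2 \<eta>2 where 2: "x j < \<xi>2" "\<xi>2 < x j + h" "x i < \<eta>2" "\<eta>2 < x i + h"
      "f (x(j := x j + h, i := x i + h)) - f (x(j := x j + h)) - f (x(i := x i + h)) + f x
       = h ^ 2 * pd i (pd j f) (x(j := \<xi>2, i := \<eta>2))"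
      using mvt2d[OF sf False[symmetric] h, of x] by blast
    have "f (x(j := x j + h, i := x i + h)) = f (x(i := x i + h, j := x j + h))"
      using False by (simp add: fun_upd_twist)
    then have "h ^ 2 * pd j (pd i f) (x(i := \<xi>1, j := \<eta>1)) = h ^ 2 * pd i (pd j f) (x(j := \<xi>2, i := \<eta>2))"
      using 1(5) 2(5) by (simp add: algebra_simps)
    then have "pd j (pd i f) (x(i := \<xi>1, j := \<eta>1)) = pd i (pd j f) (x(j := \<xi>2, i := \<eta>2))"
      using h by simp
    then show "\<exists>q. x i < fst q \<and> fst q < x i + inverse (real (Suc n)) \<and>
          x j < fst (snd q) \<and> fst (snd q) < x j + inverse (real (Suc n)) \<and>
          x j < fst (snd (snd q)) \<and> fst (snd (snd q)) < x j + inverse (real (Suc n)) \<and>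
          x i < snd (snd (snd q)) \<and> snd (snd (snd q)) < x i + inverse (real (Suc n)) \<and>
          pd j (pd i f) (x(i := fst q, j := fst (snd q))) =
          pd i (pd j f) (x(j := fst (snd (snd q)), i := snd (snd (snd q))))"
      using 1 2 unfolding h_def by (intro exI[of _ "(\<xi>1, \<eta>1, \<xi>2, \<eta>2)"]) auto
  qed
  from choice[OF this] obtain Q where Q: "\<forall>n. x i < fst (Q n) \<and> fst (Q n) < x i + inverse (real (Suc n)) \<and>
          x j < fst (snd (Q n)) \<and> fst (snd (Q n)) < x j + inverse (real (Suc n)) \<and>
          x j < fst (snd (snd (Q n))) \<and> fst (snd (snd (Q n))) < x j + inverse (real (Suc n)) \<and>
          x i < snd (snd (snd (Q n))) \<and> snd (snd (snd (Q n))) < x i + inverse (real (Suc n)) \<and>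
          pd j (pd i f) (x(i := fst (Q n), j := fst (snd (Q n)))) =
          pd i (pd j f) (x(j := fst (snd (snd (Q n))), i := snd (snd (snd (Q n)))))"
    by (elim exE)
  have l1: "(\<lambda>n. fst (Q n)) \<longlonglongrightarrow> x i" by (rule squeeze_seq) (use Q in simp)
  have l2: "(\<lambda>n. fst (snd (Q n))) \<longlonglongrightarrow> x j" by (rule squeeze_seq) (use Q in simp)
  have l3: "(\<lambda>n. fst (snd (snd (Q n)))) \<longlonglongrightarrow> x j" by (rule squeeze_seq) (use Q in simp)
  have l4: "(\<lambda>n. snd (snd (snd (Q n)))) \<longlonglongrightarrow> x i" by (rule squeeze_seq) (use Q in simp)
  have c1: "continuous_on UNIV (\<lambda>p::real \<times> real. pd j (pd i f) (x(i := fst p, j := snd p)))"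
    by (rule slice_cont[OF sf False])
  have c2: "continuous_on UNIV (\<lambda>p::real \<times> real. pd i (pd j f) (x(j := fst p, i := snd p)))"
    by (rule slice_cont[OF sf False[symmetric]])
  have t1: "(\<lambda>n. pd j (pd i f) (x(i := fst (Q n), j := fst (snd (Q n))))) \<longlonglongrightarrow>
      pd j (pd i f) (x(i := x i, j := x j))"
    using continuous_on_tendsto_compose[OF c1 tendsto_Pair[OF l1 l2]] by (simp add: o_def)
  have t2: "(\<lambda>n. pd i (pd j f) (x(j := fst (snd (snd (Q n))), i := snd (snd (snd (Q n)))))) \<longlonglongrightarrow>
      pd i (pd j f) (x(j := x j, i := x i))"
    using continuous_on_tendsto_compose[OF c2 tendsto_Pair[OF l3 l4]] by (simp add: o_def)
  have "pd j (pd i f) (x(i := x i, j := x j)) = pd i (pd j f) (x(j := x j, i := x i))"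
  proof -
    have "(\<lambda>n. pd j (pd i f) (x(i := fst (Q n), j := fst (snd (Q n))))) =
          (\<lambda>n. pd i (pd j f) (x(j := fst (snd (snd (Q n))), i := snd (snd (snd (Q n))))))"
    proof (rule ext)
      fix n show "pd j (pd i f) (x(i := fst (Q n), j := fst (snd (Q n)))) =
          pd i (pd j f) (x(j := fst (snd (snd (Q n))), i := snd (snd (snd (Q n)))))"
        using spec[OF Q, of n] by (elim conjE)
    qed
    then show ?thesis using t1 t2 LIMSEQ_unique by fastforce
  qed
  then show ?thesis by simp
qed





lemma fder_smooth_coeffs:
  assumes "\<And>m. smooth (q m)"
  shows "fder (\<lambda>h. Abs_fps (\<lambda>m. c m * q m (x(i := h)))) (Abs_fps (\<lambda>m. c m * pd i (q m) x)) (x i)"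
  unfolding fder_def using smooth_DERIV[OF assms] by (auto intro!: derivative_eq_intros)

lemma fls_fps_deriv:
  assumes "fder T T' t"
  shows "((\<lambda>h. (c + fps_to_fls (T h)) $$ m) has_real_derivative (fps_to_fls T') $$ m) (at t)"
proof (cases "m < 0")
  case True then show ?thesis by simp
next
  case False then show ?thesis using DERIV_add[OF DERIV_const fderD[OF assms, of "nat m"], of "c $$ m"] by simp
qed

lemma smooth_pd2: "smooth f \<Longrightarrow> smooth (pd a (pd b f))"
  by (intro smooth_pd)

lemma pd3_swap12:
  assumes "smooth F" shows "pd a (pd b (pd c F)) x = pd b (pd a (pd c F)) x"
  by (rule schwarz[OF smooth_pd[OF assms]])

lemma pd3_swap23:
  assumes "smooth F" shows "pd a (pd b (pd c F)) x = pd a (pd c (pd b F)) x"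
proof -
  have "pd b (pd c F) = pd c (pd b F)" using schwarz[OF assms] by (intro ext) blast
  then show ?thesis by simp
qed

definition Bp :: "(pt \<Rightarrow> real) \<Rightarrow> nat \<Rightarrow> pt \<Rightarrow> real fps" where
  "Bp F n y = Abs_fps (\<lambda>m. (if m = 0 then 0 else 1 / real m) * pd m (pd n F) y)"

definition beta :: "(pt \<Rightarrow> real) \<Rightarrow> (pt \<Rightarrow> real) \<Rightarrow> nat \<Rightarrow> pt \<Rightarrow> real fls" where
  "beta phi0 F n y = fls_X_inv ^ n + fls_const (pd n phi0 y) - fps_to_fls (Bp F n y)"

definition dbeta :: "(pt \<Rightarrow> real) \<Rightarrow> (pt \<Rightarrow> real) \<Rightarrow> nat \<Rightarrow> nat \<Rightarrow> pt \<Rightarrow> real fls" where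
  "dbeta phi0 F i n x = fls_const (pd i (pd n phi0) x) -
     fps_to_fls (Abs_fps (\<lambda>m. (if m = 0 then 0 else 1 / real m) * pd i (pd m (pd n F)) x))"

definition dA :: "(pt \<Rightarrow> real) \<Rightarrow> nat \<Rightarrow> pt \<Rightarrow> real fps" where
  "dA phi0 i x = Abs_fps (\<lambda>m. (if m = 0 then 0 else 1 / real m) * pd i (pd m phi0) x)"

definition dH :: "(pt \<Rightarrow> real) \<Rightarrow> nat \<Rightarrow> pt \<Rightarrow> real fps" where
  "dH F i x = Abs_fps (\<lambda>m. (if m = 0 then 0 else - 1 / real m) * pd i (pd 0 (pd m F)) x)"

lemma Aser_alt: "Aser phi0 y = Abs_fps (\<lambda>m. (if m = 0 then 0 else 1 / real m) * pd m phi0 y)"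
  by (simp add: Aser_def fps_eq_iff)

lemma Hser_alt: "Hser F y = Abs_fps (\<lambda>m. (if m = 0 then 0 else - 1 / real m) * pd 0 (pd m F) y)"
  by (simp add: Hser_def fps_eq_iff)

lemma fder_A:
  assumes "smooth phi0"
  shows "fder (\<lambda>h. Aser phi0 (x(i := h))) (dA phi0 i x) (x i)"
  unfolding Aser_alt dA_def by (rule fder_smooth_coeffs) (rule smooth_pd[OF assms])

lemma fder_H:
  assumes "smooth F"
  shows "fder (\<lambda>h. Hser F (x(i := h))) (dH F i x) (x i)"
  unfolding Hser_alt dH_def by (rule fder_smooth_coeffs) (intro smooth_pd assms)

lemma beta_alt: "beta phi0 F n y = fls_X_inv ^ n + fps_to_fls (fps_const (pd n phi0 y) - Bp F n y)"
  unfolding beta_def by (rule fls_eqI) simp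

lemma dbeta_alt: "dbeta phi0 F i n x = fps_to_fls (fps_const (pd i (pd n phi0) x) -
    Abs_fps (\<lambda>m. (if m = 0 then 0 else 1 / real m) * pd i (pd m (pd n F)) x))"
  unfolding dbeta_def by (rule fls_eqI) simp

lemma beta_deriv:
  assumes "smooth F" "smooth phi0"
  shows "((\<lambda>h. beta phi0 F n (x(i := h)) $$ m) has_real_derivative dbeta phi0 F i n x $$ m) (at (x i))"
proof -
  have "fder (\<lambda>h. fps_const (pd n phi0 (x(i := h))) - Bp F n (x(i := h)))
     (fps_const (pd i (pd n phi0) x) - Abs_fps (\<lambda>m. (if m = 0 then 0 else 1 / real m) * pd i (pd m (pd n F)) x)) (x i)"
    unfolding Bp_def
    by (intro fder_diff fder_fps_const fder_smooth_coeffs smooth_DERIV smooth_pd assms)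
  from fls_fps_deriv[OF this, of "fls_X_inv ^ n" m]
  show ?thesis unfolding beta_alt dbeta_alt .
qed


lemma chain2:
  fixes E :: "real \<Rightarrow> real fps" and E' :: "real fps" and f :: "real \<Rightarrow> real fls" and K :: nat
  assumes E0: "\<forall>h. E h $ 0 = 1" and dE: "fder E E' t"
    and fb: "\<forall>h. \<forall>m < - int K. f h $$ m = 0"
    and Cb: "\<forall>h. \<forall>m < - int K. CE (E h) (f h) $$ m = 0"
    and dC: "\<forall>m. ((\<lambda>h. CE (E h) (f h) $$ m) has_real_derivative D $$ m) (at t)"
  shows "\<forall>m. (\<lambda>h. f h $$ m) differentiable (at t)"
    and "CE (E t) (Abs_fls (\<lambda>m. deriv (\<lambda>h. f h $$ m) t)) =
           D - CE (E t) (kderiv (f t)) * (fls_X_inv * fps_to_fls E')"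
proof -
  define W where "W h = Abs_fps (\<lambda>n. CE (E h) (f h) $$ (int n - int K))" for h
  define W' where "W' = Abs_fps (\<lambda>n. D $$ (int n - int K))"
  have hW: "\<forall>h. CE (E h) (f h) = fls_X_inv ^ K * fps_to_fls (W h)"
  proof
    fix h show "CE (E h) (f h) = fls_X_inv ^ K * fps_to_fls (W h)"
      unfolding W_def by (rule rep_fls) (use Cb in blast)
  qed
  have Db: "\<forall>m < - int K. D $$ m = 0"
  proof (intro allI impI)
    fix m :: int assume m: "m < - int K"
    have "((\<lambda>h. CE (E h) (f h) $$ m) has_real_derivative 0) (at t)" using Cb m by simp
    then show "D $$ m = 0" using dC DERIV_unique by blast
  qed
  have DW: "D = fls_X_inv ^ K * fps_to_fls W'" unfolding W'_def by (rule rep_fls) (use Db in blast)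
  have dW: "fder W W' t" unfolding fder_def W_def W'_def using dC by simp
  show "\<forall>m. (\<lambda>h. f h $$ m) differentiable (at t)" by (rule chain(1)[OF E0 dE fb hW dW])
  show "CE (E t) (Abs_fls (\<lambda>m. deriv (\<lambda>h. f h $$ m) t)) =
           D - CE (E t) (kderiv (f t)) * (fls_X_inv * fps_to_fls E')"
    unfolding DW by (rule chain(2)[OF E0 dE fb hW dW])
qed

lemma exp_compose_power:
  fixes u :: "'a::field_char_0 fps"
  assumes u0: "u $ 0 = 0"
  shows "(fps_exp 1 oo u) ^ n = fps_exp 1 oo (of_nat n * u)"
proof (induction n)
  case 0 then show ?case by simp
next
  case (Suc n)
  have "fps_exp 1 oo (of_nat (Suc n) * u) = fps_exp 1 oo (u + of_nat n * u)"
    by (simp add: algebra_simps)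
  also have "\<dots> = (fps_exp 1 oo u) * (fps_exp 1 oo (of_nat n * u))"
    by (rule exp_compose_add) (use u0 in \<open>simp_all add: fps_of_nat[symmetric]\<close>)
  finally show ?case by (simp add: Suc)
qed





context
  fixes N :: nat and F phi0 :: "pt \<Rightarrow> real" and L P :: "pt \<Rightarrow> real fls"
  assumes smooth_F: "smooth F"
    and smooth_phi0: "smooth phi0"
    and bilinear: "\<forall>x a b. bilin_lhs phi0 x a b = bilin_rhs F x a b"
    and L_inverse: "\<forall>x. subst_kz (L x) phi0 x = fls_X_inv"
    and P_def: "\<forall>x. subst_kz (P x) phi0 x =
                   fls_const (exp (pd 0 phi0 x)) * fls_X_intpow (- int N)
                   * fps_to_fls (fps_exp 1 oo Hser F x)"
begin

lemma E0: "Eser phi0 y $ 0 = 1" by (simp add: Eser_def)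

lemma A0: "Aser phi0 y $ 0 = 0" by (simp add: Aser_def)

lemma subst_CE: "subst_kz f phi0 y = CE (Eser phi0 y) f"
  unfolding subst_kz_def CE_def using regpart_inv_kz[OF E0] by (simp add: kz_def kzE_def)

lemma CL: "CE (Eser phi0 y) (L y) = fls_X_inv"
  using L_inverse subst_CE by simp

lemma CP: "CE (Eser phi0 y) (P y) = fls_const (exp (pd 0 phi0 y)) * fls_X_intpow (- int N)
                   * fps_to_fls (fps_exp 1 oo Hser F y)"
  using P_def subst_CE by simp

lemma bil_nat:
  "\<forall>i j. (if j = 1 then Eser phi0 y $ i else 0) - (if i = 1 then Eser phi0 y $ j else 0) =
      (if 1 \<le> j then bexp (Gbi F y) i (j - 1) else 0) - (if 1 \<le> i then bexp (Gbi F y) (i - 1) j else 0)"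
proof (intro allI)
  fix i j :: nat
  have "bilin_lhs phi0 y (1 - int i) (1 - int j) = bilin_rhs F y (1 - int i) (1 - int j)"
    using bilinear by blast
  moreover have "bilin_lhs phi0 y (1 - int i) (1 - int j) =
      (if j = 1 then Eser phi0 y $ i else 0) - (if i = 1 then Eser phi0 y $ j else 0)"
    by (auto simp: bilin_lhs_def)
  moreover have "bilin_rhs F y (1 - int i) (1 - int j) =
      (if 1 \<le> j then bexp (Gbi F y) i (j - 1) else 0) - (if 1 \<le> i then bexp (Gbi F y) (i - 1) j else 0)"
    by (auto simp: bilin_rhs_def bcoeff_def nat_diff_distrib)
  ultimately show "(if j = 1 then Eser phi0 y $ i else 0) - (if i = 1 then Eser phi0 y $ j else 0) =
      (if 1 \<le> j then bexp (Gbi F y) i (j - 1) else 0) - (if 1 \<le> i then bexp (Gbi F y) (i - 1) j else 0)"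
    by simp
qed

lemma B_formula:
  assumes n: "1 \<le> n"
  shows "CE (Eser phi0 y) (Bn L n y) = beta phi0 F n y"
proof -
  have G0: "\<forall>i. Gbi F y i 0 = 0" by (simp add: Gbi_def)
  have "CE (Eser phi0 y) (pospart (L y ^ n)) =
    fls_X_inv ^ n + fls_const (of_nat n * Aser phi0 y $ n) - fps_to_fls (Abs_fps (\<lambda>i. of_nat n * Gbi F y i n))"
    by (rule Bn_formula[OF A0 _ G0 bil_nat n CL]) (simp add: Eser_def)
  also have "of_nat n * Aser phi0 y $ n = pd n phi0 y" using n by (simp add: Aser_def)
  also have "Abs_fps (\<lambda>i. of_nat n * Gbi F y i n) = Bp F n y"
    using n by (auto simp: Bp_def Gbi_def fps_eq_iff)
  finally show ?thesis by (simp add: Bn_def beta_def)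
qed

lemma L_below: "m < -1 \<Longrightarrow> L y $$ m = 0"
proof -
  assume m: "m < -1"
  have "fls_subdegree (L y) = -1" using CE_subdeg[OF E0, of y "L y"] CL by simp
  then show "L y $$ m = 0" using m by simp
qed

lemma pospart_L: "pospart (L y) = fls_X_inv"
proof -
  have pp: "pospart (L y) = fls_const (L y $$ (-1)) * fls_X_inv"
  proof (rule fls_eqI)
    fix m :: int
    show "pospart (L y) $$ m = (fls_const (L y $$ (-1)) * fls_X_inv) $$ m"
      using L_below[of m y] by (auto simp: pospart_nth)
  qed
  have "CE (Eser phi0 y) (pospart (L y)) = beta phi0 F 1 y"
    using B_formula[of 1 y] by (simp add: Bn_def)
  then have "fls_const (L y $$ (-1)) * kzE (Eser phi0 y) = beta phi0 F 1 y"
    unfolding pp using E0 by (simp add: CE_mult CE_const CE_X_inv)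
  then have "(fls_const (L y $$ (-1)) * kzE (Eser phi0 y)) $$ (-1) = beta phi0 F 1 y $$ (-1)" by simp
  then have "L y $$ (-1) = 1" using E0 by (simp add: kzE_def fls_X_inv_times_conv_shift beta_def)
  then show ?thesis using pp by simp
qed

lemma kz_beta1: "kzE (Eser phi0 y) = beta phi0 F 1 y"
  using B_formula[of 1 y] E0 by (simp add: Bn_def pospart_L CE_X_inv)


lemma dE: "fder (\<lambda>h. Eser phi0 (x(i := h))) (Eser phi0 x * dA phi0 i x) (x i)"
  using fder_exp_compose[OF fder_A[OF smooth_phi0, of x i]] A0
  by (simp add: Eser_def[abs_def])

definition kappa :: "nat \<Rightarrow> pt \<Rightarrow> real fls" where
  "kappa i x = fls_X_inv * fps_to_fls (Eser phi0 x * dA phi0 i x)"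

lemma kappa_dbeta: "kappa i x = dbeta phi0 F i 1 x"
proof (rule fls_eqI)
  fix m
  have rep: "\<forall>h. kzE (Eser phi0 (x(i := h))) = fls_X_inv ^ 1 * fps_to_fls (Eser phi0 (x(i := h)))"
    by (simp add: kzE_def)
  have d1: "((\<lambda>h. kzE (Eser phi0 (x(i := h))) $$ m) has_real_derivative kappa i x $$ m) (at (x i))"
    using fder_fls[OF rep dE, of m] by (simp add: kappa_def)
  have d2: "((\<lambda>h. kzE (Eser phi0 (x(i := h))) $$ m) has_real_derivative dbeta phi0 F i 1 x $$ m) (at (x i))"
    unfolding kz_beta1 by (rule beta_deriv[OF smooth_F smooth_phi0])
  show "kappa i x $$ m = dbeta phi0 F i 1 x $$ m" using DERIV_unique[OF d1 d2] .
qed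

lemma CP_rep: "CE (Eser phi0 y) (P y) = fls_X_inv ^ N * fps_to_fls (fps_const (exp (pd 0 phi0 y)) * (fps_exp 1 oo Hser F y))"
proof -
  have sh: "fls_X_intpow (- int N) * f = fls_shift (int N) f" for f :: "real fls"
    using fls_X_intpow_times_conv_shift(1)[of "- int N" f] by simp
  show ?thesis unfolding CP mult.assoc sh
    by (rule fls_eqI) (simp add: fls_X_inv_power_times_conv_shift)
qed


lemma P_below: "m < - int N \<Longrightarrow> P y $$ m = 0"
proof -
  assume m: "m < - int N"
  have "fls_subdegree (CE (Eser phi0 y) (P y)) = - int N"
    unfolding CP_rep by (rule fls_subdegree_eqI) (simp_all add: fls_X_inv_power_times_conv_shift)
  then have "fls_subdegree (P y) = - int N" using CE_subdeg[OF E0] by simp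
  then show "P y $$ m = 0" using m by simp
qed


definition Ph :: "pt \<Rightarrow> real fps" where "Ph y = Abs_fps (\<lambda>n. P y $$ (int n - int N))"

lemma P_rep: "P y = fls_X_inv ^ N * fps_to_fls (Ph y)"
  unfolding Ph_def by (rule rep_fls) (use P_below in blast)

lemma Ph_comp: "Eser phi0 y ^ N * (Ph y oo gE (Eser phi0 y)) = fps_const (exp (pd 0 phi0 y)) * (fps_exp 1 oo Hser F y)"
proof -
  have "fls_X_inv ^ N * fps_to_fls (Eser phi0 y ^ N * (Ph y oo gE (Eser phi0 y))) =
        fls_X_inv ^ N * fps_to_fls (fps_const (exp (pd 0 phi0 y)) * (fps_exp 1 oo Hser F y))"
    using CE_rep[OF E0, of y N "Ph y"] CP_rep[of y] P_rep[of y] by simp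
  then show ?thesis by simp
qed

lemma p0: "P y $$ (- int N) = exp (pd 0 phi0 y)"
proof -
  have "P y $$ (- int N) = Ph y $ 0" by (simp add: Ph_def)
  also have "\<dots> = (Eser phi0 y ^ N * (Ph y oo gE (Eser phi0 y))) $ 0"
    using E0 by (simp add: fps_power_zeroth)
  also have "\<dots> = exp (pd 0 phi0 y)" unfolding Ph_comp by simp
  finally show ?thesis .
qed

lemma logP_const_eq: "logP_const N P = pd 0 phi0"
  by (rule ext) (simp add: logP_const_def p0)

lemma sigma_C: "CE (Eser phi0 y) (logP_ser N P y) = fps_to_fls (Hser F y - fps_const (of_nat N) * Aser phi0 y)"
proof -
  define E where "E = Eser phi0 y"
  define A where "A = Aser phi0 y"
  define H where "H = Hser F y"
  define g where "g = gE E"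
  define e where "e = exp (pd 0 phi0 y)"
  have E0': "E $ 0 = 1" by (simp add: E_def E0)
  have EA: "E = fps_exp 1 oo A" by (simp add: E_def A_def Eser_def)
  have A0': "A $ 0 = 0" by (simp add: A_def A0)
  have H0: "H $ 0 = 0" by (simp add: H_def Hser_def)
  have g0: "g $ 0 = 0" by (simp add: g_def gE0[OF E0'])
  have e0: "e \<noteq> 0" by (simp add: e_def)
  have Ph0: "Ph y $ 0 = e" using p0[of y] by (simp add: Ph_def e_def)
  have abs: "Abs_fps (\<lambda>n. P y $$ (int n - int N) / P y $$ (- int N)) = fps_const (1 / e) * Ph y"
    by (simp add: fps_eq_iff p0 Ph_def e_def)
  define Q where "Q = fps_const (1 / e) * Ph y - 1"
  have Q0: "Q $ 0 = 0" using Ph0 e0 by (simp add: Q_def)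
  have sig: "logP_ser N P y = fps_to_fls (fps_ln 1 oo Q)"
    by (simp add: logP_ser_def abs Q_def)
  have Phg: "Ph y oo g = inverse E ^ N * (fps_const e * (fps_exp 1 oo H))"
  proof -
    have "E ^ N * (Ph y oo g) = fps_const e * (fps_exp 1 oo H)"
      using Ph_comp[of y] by (simp add: E_def g_def e_def H_def)
    then have "inverse E ^ N * (E ^ N * (Ph y oo g)) = inverse E ^ N * (fps_const e * (fps_exp 1 oo H))" by simp
    moreover have "inverse E ^ N * E ^ N = 1"
    proof -
      have "inverse E * E = 1" using E0' by (simp add: inverse_mult_eq_1)
      then have "(inverse E * E) ^ N = 1" by simp
      then show ?thesis by (simp only: power_mult_distrib)
    qed
    ultimately show ?thesis by (simp add: mult.assoc[symmetric])
  qed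
  have Qg: "Q oo g = inverse E ^ N * (fps_exp 1 oo H) - 1"
  proof -
    have "Q oo g = fps_const (1 / e) * (Ph y oo g) - 1"
      using g0 by (simp add: Q_def fps_compose_sub_distrib fps_compose_mult_distrib)
    also have "\<dots> = inverse E ^ N * (fps_exp 1 oo H) - 1"
      unfolding Phg using e0 by (simp add: ac_simps flip: fps_const_mult)
    finally show ?thesis .
  qed
  have iE: "inverse E ^ N = fps_exp 1 oo (of_nat N * - A)"
    unfolding EA using A0' by (simp add: exp_compose_minus[symmetric] exp_compose_power)
  have expv: "inverse E ^ N * (fps_exp 1 oo H) = fps_exp 1 oo (H - fps_const (of_nat N) * A)"
  proof -
    have "fps_exp 1 oo (of_nat N * - A + H) = (fps_exp 1 oo (of_nat N * - A)) * (fps_exp 1 oo H)"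
      by (rule exp_compose_add) (use A0' H0 in simp_all)
    then show ?thesis unfolding iE by (simp add: algebra_simps fps_of_nat[symmetric])
  qed
  have "CE E (logP_ser N P y) = fps_to_fls ((fps_ln 1 oo Q) oo g)"
    unfolding sig g_def by (rule CE_fps[OF E0'])
  also have "(fps_ln 1 oo Q) oo g = fps_ln 1 oo (Q oo g)"
    by (rule fps_compose_assoc[symmetric, OF g0 Q0])
  also have "\<dots> = H - fps_const (of_nat N) * A"
    unfolding Qg expv by (rule ln_exp_compose) (simp add: H0 A0')
  finally show ?thesis by (simp add: E_def H_def A_def)
qed


lemma pdS_eq: "pdS i S x = Abs_fls (\<lambda>m. deriv (\<lambda>h. S (x(i := h)) $$ m) (x i))"
  by (simp add: pdS_def pd_def)

lemma E0fam: "\<forall>h. Eser phi0 (x(i := h)) $ 0 = 1" by (simp add: E0)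

lemma kappa_alt: "fls_X_inv * fps_to_fls (Eser phi0 x * dA phi0 i x) = kappa i x"
  by (simp add: kappa_def)

lemma chainL:
  shows "\<forall>m. (\<lambda>h. L (x(i := h)) $$ m) differentiable (at (x i))"
    and "CE (Eser phi0 x) (pdS i L x) = - CE (Eser phi0 x) (kderiv (L x)) * kappa i x"
proof -
  have fb: "\<forall>h. \<forall>m < - int 1. L (x(i := h)) $$ m = 0" using L_below by simp
  have hW: "\<forall>h. CE (Eser phi0 (x(i := h))) (L (x(i := h))) = fls_X_inv ^ 1 * fps_to_fls 1" using CL by simp
  note c = chain[OF E0fam dE fb hW fder_const]
  show "\<forall>m. (\<lambda>h. L (x(i := h)) $$ m) differentiable (at (x i))" by (rule c(1))
  show "CE (Eser phi0 x) (pdS i L x) = - CE (Eser phi0 x) (kderiv (L x)) * kappa i x"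
    using c(2) by (simp add: pdS_eq kappa_def)
qed

lemma Ln_below: "m < - int n \<Longrightarrow> (L y ^ n) $$ m = 0"
proof -
  assume m: "m < - int n"
  have "fls_subdegree (L y) = -1" using CE_subdeg[OF E0, of y "L y"] CL by simp
  then have "fls_subdegree (L y ^ n) = - int n" by (simp add: fls_subdegree_pow)
  then show ?thesis using m by simp
qed

lemma chainB:
  assumes n: "1 \<le> n"
  shows "CE (Eser phi0 x) (pdS i (Bn L n) x) = dbeta phi0 F i n x - CE (Eser phi0 x) (kderiv (Bn L n x)) * kappa i x"
proof -
  have fb: "\<forall>h. \<forall>m < - int n. Bn L n (x(i := h)) $$ m = 0"
    by (auto simp: Bn_def pospart_nth Ln_below)
  have Cb: "\<forall>h. \<forall>m < - int n. CE (Eser phi0 (x(i := h))) (Bn L n (x(i := h))) $$ m = 0"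
    using n by (auto simp: B_formula beta_def)
  have dC: "\<forall>m. ((\<lambda>h. CE (Eser phi0 (x(i := h))) (Bn L n (x(i := h))) $$ m) has_real_derivative
      dbeta phi0 F i n x $$ m) (at (x i))"
    using n by (simp add: B_formula beta_deriv[OF smooth_F smooth_phi0])
  show ?thesis using chain2(2)[OF E0fam dE fb Cb dC] by (simp add: pdS_eq kappa_def)
qed

lemma chainSigma:
  "CE (Eser phi0 x) (pdS i (logP_ser N P) x) =
     fps_to_fls (dH F i x - fps_const (of_nat N) * dA phi0 i x) - CE (Eser phi0 x) (kderiv (logP_ser N P x)) * kappa i x"
proof -
  have fb: "\<forall>h. \<forall>m < - int 0. logP_ser N P (x(i := h)) $$ m = 0" by (simp add: logP_ser_def)
  have hW: "\<forall>h. CE (Eser phi0 (x(i := h))) (logP_ser N P (x(i := h))) =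
      fls_X_inv ^ 0 * fps_to_fls (Hser F (x(i := h)) - fps_const (of_nat N) * Aser phi0 (x(i := h)))"
    by (simp add: sigma_C)
  have dW: "fder (\<lambda>h. Hser F (x(i := h)) - fps_const (of_nat N) * Aser phi0 (x(i := h)))
      (dH F i x - fps_const (of_nat N) * dA phi0 i x) (x i)"
    by (intro fder_diff fder_const_mult fder_H fder_A smooth_F smooth_phi0)
  show ?thesis using chain(2)[OF E0fam dE fb hW dW] by (simp add: pdS_eq kappa_def)
qed

lemma diffP: "\<forall>m. (\<lambda>h. P (x(i := h)) $$ m) differentiable (at (x i))"
proof -
  have fb: "\<forall>h. \<forall>m < - int N. P (x(i := h)) $$ m = 0" using P_below by simp
  have hW: "\<forall>h. CE (Eser phi0 (x(i := h))) (P (x(i := h))) =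
      fls_X_inv ^ N * fps_to_fls (fps_const (exp (pd 0 phi0 (x(i := h)))) * (fps_exp 1 oo Hser F (x(i := h))))"
    by (simp add: CP_rep)
  have H0: "\<forall>h. Hser F (x(i := h)) $ 0 = 0" by (simp add: Hser_def)
  have de: "((\<lambda>h. exp (pd 0 phi0 (x(i := h)))) has_real_derivative exp (pd 0 phi0 x) * pd i (pd 0 phi0) x) (at (x i))"
    using smooth_DERIV[OF smooth_pd[OF smooth_phi0], of 0 x i] by (auto intro!: derivative_eq_intros)
  have dW: "fder (\<lambda>h. fps_const (exp (pd 0 phi0 (x(i := h)))) * (fps_exp 1 oo Hser F (x(i := h))))
     (fps_const (exp (pd 0 phi0 x) * pd i (pd 0 phi0) x) * (fps_exp 1 oo Hser F (x(i := x i))) +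
      fps_const (exp (pd 0 phi0 (x(i := x i)))) * ((fps_exp 1 oo Hser F (x(i := x i))) * dH F i x)) (x i)"
    by (rule fder_mult[OF fder_fps_const[OF de] fder_exp_compose[OF fder_H[OF smooth_F] H0]])
  show ?thesis by (rule chain(1)[OF E0fam dE fb hW dW])
qed


definition lam :: "nat \<Rightarrow> pt \<Rightarrow> real fls" where
  "lam i x = fls_const (pd i (pd 0 phi0) x) + fps_to_fls (dH F i x)"

lemma G_kappa: "fps_to_fls (gE (Eser phi0 x)) * kappa i x = fps_to_fls (dA phi0 i x)"
proof -
  have "inverse (Eser phi0 x) * Eser phi0 x = 1" using E0 by (simp add: inverse_mult_eq_1)
  then have e: "fps_X * inverse (Eser phi0 x) * (Eser phi0 x * dA phi0 i x) = fps_X * dA phi0 i x"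
    by (metis mult.assoc mult.right_neutral)
  have x: "fls_X * fls_X_inv = (1 :: real fls)" by (rule fls_eqI) (simp add: fls_X_times_conv_shift)
  have "fps_to_fls (gE (Eser phi0 x)) * kappa i x =
      fls_X_inv * fps_to_fls (fps_X * inverse (Eser phi0 x) * (Eser phi0 x * dA phi0 i x))"
    by (simp add: gE_def kappa_def fls_times_fps_to_fls ac_simps)
  also have "\<dots> = (fls_X * fls_X_inv) * fps_to_fls (dA phi0 i x)"
    unfolding e by (simp add: fls_times_fps_to_fls ac_simps)
  finally show ?thesis by (simp add: x)
qed

lemma lam_eq: "CE (Eser phi0 x) (logP_d N P i x) = lam i x - CE (Eser phi0 x) (logP_dk N P x) * kappa i x"
proof -
  have E0x: "Eser phi0 x $ 0 = 1" by (rule E0)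
  have "CE (Eser phi0 x) (logP_d N P i x) = fls_const (pd i (pd 0 phi0) x) +
      (fps_to_fls (dH F i x - fps_const (of_nat N) * dA phi0 i x) - CE (Eser phi0 x) (kderiv (logP_ser N P x)) * kappa i x)"
    by (simp add: logP_d_def CE_add[OF E0x] CE_const[OF E0x] logP_const_eq chainSigma)
  moreover have "CE (Eser phi0 x) (logP_dk N P x) =
      fls_const (of_nat N) * fps_to_fls (gE (Eser phi0 x)) + CE (Eser phi0 x) (kderiv (logP_ser N P x))"
    by (simp add: logP_dk_def CE_add[OF E0x] CE_mult[OF E0x] CE_const[OF E0x] CE_X[OF E0x])
  moreover have "fps_to_fls (fps_const (of_nat N) * dA phi0 i x) = fls_const (of_nat N) * fps_to_fls (dA phi0 i x)"
    by (rule fls_eqI) simp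
  ultimately show ?thesis
    using G_kappa[of x i] by (simp add: lam_def algebra_simps)
qed

lemma S1: "kappa n x = dbeta phi0 F 1 n x"
proof -
  have c: "pd n (pd 1 phi0) x = pd 1 (pd n phi0) x" by (rule schwarz[OF smooth_phi0])
  have m: "pd n (pd m (pd 1 F)) x = pd 1 (pd m (pd n F)) x" for m
    using pd3_swap23[OF smooth_F, of n m 1 x] pd3_swap12[OF smooth_F, of n 1 m x]
      pd3_swap23[OF smooth_F, of 1 n m x] by simp
  show ?thesis unfolding kappa_dbeta by (rule fls_eqI) (simp add: dbeta_def c[simplified] m[simplified])
qed

lemma S2: "kappa 0 x = lam 1 x"
proof -
  have c: "pd 0 (pd 1 phi0) x = pd 1 (pd 0 phi0) x" by (rule schwarz[OF smooth_phi0])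
  have m: "pd 0 (pd m (pd 1 F)) x = pd 1 (pd 0 (pd m F)) x" for m
    using pd3_swap23[OF smooth_F, of 0 m 1 x] pd3_swap12[OF smooth_F, of 0 1 m x] by simp
  show ?thesis unfolding kappa_dbeta by (rule fls_eqI) (simp add: dbeta_def lam_def dH_def c[simplified] m[simplified])
qed

lemma S3: "lam n x = dbeta phi0 F 0 n x"
proof -
  have c: "pd n (pd 0 phi0) x = pd 0 (pd n phi0) x" by (rule schwarz[OF smooth_phi0])
  have m: "pd n (pd 0 (pd m F)) x = pd 0 (pd m (pd n F)) x" for m
    using pd3_swap23[OF smooth_F, of 0 m n x] pd3_swap12[OF smooth_F, of 0 n m x] by simp
  show ?thesis by (rule fls_eqI) (simp add: dbeta_def lam_def dH_def c m)
qed

lemma dcm: "dcmKP N L P"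
  unfolding dcmKP_def
proof (intro conjI allI impI)
  fix x
  show "L x $$ (-1) = 1" using arg_cong[OF pospart_L[of x], of "\<lambda>f. f $$ (-1)"] by (simp add: pospart_nth)
  fix m :: int assume "m < -1" then show "L x $$ m = 0" by (rule L_below)
next
  fix x show "P x $$ (- int N) \<noteq> 0" by (simp add: p0)
  fix m :: int assume "m < - int N" then show "P x $$ m = 0" by (rule P_below)
next
  fix m i x
  show "(\<lambda>h. L (x(i := h)) $$ m) differentiable (at (x i))" using chainL(1) by blast
  show "(\<lambda>h. P (x(i := h)) $$ m) differentiable (at (x i))" using diffP by blast
next
  fix n :: nat and x assume n: "1 \<le> n"
  have E0x: "Eser phi0 x $ 0 = 1" by (rule E0)
  let ?C = "CE (Eser phi0 x)"
  have "?C (pdS n L x) = ?C (pbr (Bn L n) L x)"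
    unfolding pbr_def CE_diff[OF E0x] CE_mult[OF E0x] chainL(2) chainB[OF n] S1[of n x]
    by (simp add: algebra_simps)
  then show "pdS n L x = pbr (Bn L n) L x" by (rule CE_inj[OF E0x])
next
  fix x
  have E0x: "Eser phi0 x $ 0 = 1" by (rule E0)
  let ?C = "CE (Eser phi0 x)"
  have "?C (pdS 0 L x) = ?C (pbr_log N P L x)"
    unfolding pbr_log_def CE_diff[OF E0x] CE_mult[OF E0x] chainL(2) lam_eq S2
    by (simp add: algebra_simps)
  then show "pdS 0 L x = pbr_log N P L x" by (rule CE_inj[OF E0x])
next
  fix n :: nat and x assume n: "1 \<le> n"
  have E0x: "Eser phi0 x $ 0 = 1" by (rule E0)
  let ?C = "CE (Eser phi0 x)"
  have "?C (logP_d N P n x) = ?C (pdS 0 (Bn L n) x - pbr_log N P (Bn L n) x)"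
    unfolding pbr_log_def CE_diff[OF E0x] CE_mult[OF E0x] chainB[OF n] lam_eq S1[of n x] S3[of n x]
    using S2[of x] by (simp add: algebra_simps)
  then show "logP_d N P n x = pdS 0 (Bn L n) x - pbr_log N P (Bn L n) x" by (rule CE_inj[OF E0x])
qed

end

theorem mainTheorem11:
  fixes N :: nat
    and F phi0 :: "pt \<Rightarrow> real"
    and L P :: "pt \<Rightarrow> real fls"
  assumes N_pos: "0 < N"
    and smooth_F: "smooth F"
    and smooth_phi0: "smooth phi0"
    and bilinear: "\<forall>x a b. bilin_lhs phi0 x a b = bilin_rhs F x a b"
    and L_inverse: "\<forall>x. subst_kz (L x) phi0 x = fls_X_inv"
    and P_def: "\<forall>x. subst_kz (P x) phi0 x =
                   fls_const (exp (pd 0 phi0 x)) * fls_X_intpow (- int N)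
                   * fps_to_fls (fps_exp 1 oo Hser F x)"
  shows "dcmKP N L P"
  by (rule dcm[OF smooth_F smooth_phi0 bilinear L_inverse P_def])



end
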